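(* Let $n\ge N\ge 2$, let $0<q<1$, let $p>0$ be real, and let $t^{1/2}$ be a nonzero complex number. Let $\mathbf f=\{f_\epsilon\}_{\epsilon\in I_{d_0,\dots,d_{N-1}}}$ be a qKZ family of sign $(+)$ (resp. $(-)$) with exponents $(c_0,\dots,c_{N-1})$, where in the plus case $q=t^{1/2}$ and in the minus case $q=-t^{-1/2}$. Fix an $N$-th root $C$ of $\prod_{l=0}^{N-1}c_l$. Let $\alpha,\beta,h,K,F,G$ be as defined in the context (according to the sign). Then $G(z_1,\dots,z_n)=K(z_1,\dots,z_n)F(z_1,\dots,z_n)$ is a solution of the qKZ equation with difference step $p$ and parameters $$\kappa_j=\Big(\prod_{l=0}^{j-1}c_l\Big)\,C^{-j}\qquad(j=1,\dots,N-1).$$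
   Context: Notation: $P_n=\mathbb{C}[z_1^{\pm1},\dots,z_n^{\pm1}]$. For $1\le i\le n-1$, $\tau_i$ swaps $z_i$ and $z_{i+1}$; the Demazure–Lusztig operator on $P_n$ is $\widehat T_i:=t^{1/2}\tau_i+\frac{t^{1/2}-t^{-1/2}}{z_i/z_{i+1}-1}(\tau_i-1)$, and $(\omega f)(z_1,\dots,z_n):=f(pz_n,z_1,\dots,z_{n-1})$. For positive integers $d_0,\dots,d_{N-1}$ with $\sum_j d_j=n$, $I_{d_0,\dots,d_{N-1}}$ is the set of $\epsilon=(\epsilon_1,\dots,\epsilon_n)\in\{0,\dots,N-1\}^n$ with $\#\{a:\epsilon_a=j\}=d_j$ for all $j$. A family $\{f_\epsilon\in P_n\}_{\epsilon\in I_{d_0,\dots,d_{N-1}}}$ is a qKZ family of sign $(+)$ (resp. $(-)$) with exponents $(c_0,\dots,c_{N-1})$ if: (i) whenever $\epsilon_i=\epsilon_{i+1}$, $\widehat T_if_\epsilon=t^{1/2}f_\epsilon$ (resp. $\widehat T_if_\epsilon=-t^{-1/2}f_\epsilon$); (ii) whenever $\epsilon_i>\epsilon_{i+1}$, $\widehat T_if_{(\dots,\epsilon_i,\epsilon_{i+1},\dots)}=f_{(\dots,\epsilon_{i+1},\epsilon_i,\dots)}$; (iii) $\omega f_{(\epsilon_n,\epsilon_1,\dots,\epsilon_{n-1})}=c_{\epsilon_n}f_{(\epsilon_1,\dots,\epsilon_n)}$ for all $\epsilon$. (The formulas below require $\prod_l c_l\ne0$.) qKZ equation: $V=\bigoplus_{\epsilon=0}^{N-1}\mathbb{C}v_\epsilon$.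 Define $\bar R(z)\in\mathrm{End}(V\otimes V)$ by $\bar R(z)(v_i\otimes v_i)=v_i\otimes v_i$ and, for $i\ne j$, $\bar R(z)(v_i\otimes v_j)=\frac{(1-z)q}{1-q^2z}v_i\otimes v_j+\frac{(1-q^2)z^{\theta(j>i)}}{1-q^2z}v_j\otimes v_i$, where $\theta(P)=1$ if $P$ is true and $0$ otherwise. Let $(z;x)_\infty=\prod_{j\ge0}(1-x^jz)$, $r(z)=q^{\frac1N-1}\frac{(q^2z;q^{2N})_\infty(q^{2N-2}z;q^{2N})_\infty}{(z;q^{2N})_\infty(q^{2N}z;q^{2N})_\infty}$ and $R(z)=r(z)\bar R(z)$. For $m\ne l$, $R_{m,l}(z)$ acts on $V^{\otimes n}$ as $R(z)$ with its first tensor slot on the $m$-th factor and second slot on the $l$-th factor. For $\kappa_1,\dots,\kappa_{N-1}$, the operator $\prod_{j=1}^{N-1}\kappa_j^{h_j}$ on $V$ acts by $v_i\mapsto \kappa_{i+1}\kappa_i^{-1}v_i$ (with $\kappa_0=\kappa_N=1$), and $(\cdot)_m$ means acting on the $m$-th factor. A $V^{\otimes n}$-valued function $G$ solves the qKZ equation (difference step $p$, parameters $\kappa_j$) if for all $m=1,\dots,n$: $G(z_1,\dots,pz_m,\dots,z_n)=R_{m,m-1}(pz_m/z_{m-1})\cdots R_{m,1}(pz_m/z_1)\,(\prod_j\kappa_j^{h_j})_m\,R_{n,m}(z_n/z_m)^{-1}\cdots R_{m+1,m}(z_{m+1}/z_m)^{-1}G(z_1,\dots,z_n)$. Construction: In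 the plus case, $\alpha,\beta$ are given by $p^\alpha=C^{-1}q^{-(n+1)(1/N-1)}$, $p^\beta=q^{2(1/N-1)}$, and $h$ is any function with $\frac{h(p^{-1}z)}{h(z)}=\frac{(z;q^{2N})_\infty(q^{2N}z;q^{2N})_\infty}{(q^2z;q^{2N})_\infty(q^{2N-2}z;q^{2N})_\infty}$. In the minus case, $p^\alpha=(-1)^{n-1}C^{-1}q^{-(n+1)(1+1/N)}$, $p^\beta=q^{2(1+1/N)}$, and $h$ is any function with $\frac{h(p^{-1}z)}{h(z)}=\frac{(z;q^{2N})_\infty(q^{2N}z;q^{2N})_\infty}{(q^{2(N+1)}z;q^{2N})_\infty(q^{-2}z;q^{2N})_\infty}$. Then $K(z_1,\dots,z_n)=\prod_{a=1}^nz_a^{\alpha+\beta a}\prod_{1\le a<b\le n}h(z_b/z_a)$, $F=\sum_{\epsilon\in I_{d_0,\dots,d_{N-1}}}f_\epsilon\,v_{\epsilon_1}\otimes\cdots\otimes v_{\epsilon_n}$, and $G=KF$. *)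

theory Defs
  imports "HOL-Analysis.Analysis"
begin

text \<open>Variables z are represented as functions nat \<Rightarrow> complex, coordinate
  z a (0-based, a < n) being the paper's z_(a+1).  Indices of sequences epsilon are lists of
  length n; position i of the list is the paper's epsilon_(i+1).  A vector in V^(tensor n) is a
  function nat list \<Rightarrow> complex giving the coefficient of the basis vector
  v_(e!0) \<otimes> ... \<otimes> v_(e!(n-1)); it vanishes off the index set tidx n N.\<close>

definition laurent_poly :: "nat \<Rightarrow> ((nat \<Rightarrow> complex) \<Rightarrow> complex) \<Rightarrow> bool" where
  "laurent_poly n f \<longleftrightarrow>
     (\<exists>(A :: (nat \<Rightarrow> int) set) (cf :: (nat \<Rightarrow> int) \<Rightarrow> complex). finite A \<and>
        (\<forall>z. f z = (\<Sum>e\<in>A. cf e * (\<Prod>i<n. z i powi e i))))"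

definition swapz :: "nat \<Rightarrow> (nat \<Rightarrow> complex) \<Rightarrow> (nat \<Rightarrow> complex)" where
  "swapz i z = z(i := z (Suc i), Suc i := z i)"

text \<open>Demazure--Lusztig operator (0-based index i acts on coordinates i, i+1);
  t12 is t^(1/2).  The formula is used pointwise where z i \<noteq> z (i+1).\<close>
definition DL :: "complex \<Rightarrow> nat \<Rightarrow> ((nat \<Rightarrow> complex) \<Rightarrow> complex) \<Rightarrow> (nat \<Rightarrow> complex) \<Rightarrow> complex" where
  "DL t12 i f z = t12 * f (swapz i z)
      + (t12 - inverse t12) / (z i / z (Suc i) - 1) * (f (swapz i z) - f z)"

definition omega :: "real \<Rightarrow> nat \<Rightarrow> ((nat \<Rightarrow> complex) \<Rightarrow> complex) \<Rightarrow> (nat \<Rightarrow> complex) \<Rightarrow> complex" where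
  "omega p n f z = f (\<lambda>k. if k = 0 then of_real p * z (n - 1) else if k < n then z (k - 1) else z k)"

definition Iset :: "nat \<Rightarrow> nat \<Rightarrow> (nat \<Rightarrow> nat) \<Rightarrow> nat list set" where
  "Iset n N d = {e. length e = n \<and> set e \<subseteq> {..<N} \<and> (\<forall>j<N. count_list e j = d j)}"

definition torus :: "nat \<Rightarrow> (nat \<Rightarrow> complex) \<Rightarrow> bool" where
  "torus n z \<longleftrightarrow> (\<forall>a<n. z a \<noteq> 0)"

text \<open>qKZ family of sign (+) (pos = True) or (-) (pos = False) with exponents c.\<close>
definition qKZ_family :: "bool \<Rightarrow> complex \<Rightarrow> real \<Rightarrow> nat \<Rightarrow> nat \<Rightarrow> (nat \<Rightarrow> nat) \<Rightarrow> (nat \<Rightarrow> complex)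
    \<Rightarrow> (nat list \<Rightarrow> (nat \<Rightarrow> complex) \<Rightarrow> complex) \<Rightarrow> bool" where
  "qKZ_family pos t12 p n N d c f \<longleftrightarrow>
     (\<forall>e\<in>Iset n N d. laurent_poly n (f e)) \<and>
     (\<forall>e\<in>Iset n N d. \<forall>i. Suc i < n \<and> e ! i = e ! Suc i \<longrightarrow>
        (\<forall>z. torus n z \<and> z i \<noteq> z (Suc i) \<longrightarrow>
           DL t12 i (f e) z = (if pos then t12 else - inverse t12) * f e z)) \<and>
     (\<forall>e\<in>Iset n N d. \<forall>i. Suc i < n \<and> e ! i > e ! Suc i \<longrightarrow>
        (\<forall>z. torus n z \<and> z i \<noteq> z (Suc i) \<longrightarrow>
           DL t12 i (f e) z = f (e[i := e ! Suc i, Suc i := e ! i]) z)) \<and>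
     (\<forall>e\<in>Iset n N d. \<forall>z. torus n z \<longrightarrow>
        omega p n (f (last e # butlast e)) z = c (last e) * f e z)"

definition qpoch :: "complex \<Rightarrow> complex \<Rightarrow> complex" where
  "qpoch z x = (\<Prod>j. 1 - x ^ j * z)"

definition rfun :: "real \<Rightarrow> nat \<Rightarrow> complex \<Rightarrow> complex" where
  "rfun q N w = of_real (q powr (1 / real N - 1)) *
     (qpoch (of_real q ^ 2 * w) (of_real q ^ (2*N)) * qpoch (of_real q ^ (2*N - 2) * w) (of_real q ^ (2*N)))
     / (qpoch w (of_real q ^ (2*N)) * qpoch (of_real q ^ (2*N) * w) (of_real q ^ (2*N)))"

text \<open>Matrix entry of Rbar(w): coefficient of v_a \<otimes> v_b in Rbar(w)(v_i \<otimes> v_j).\<close>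
definition Rbar_ent :: "real \<Rightarrow> complex \<Rightarrow> nat \<Rightarrow> nat \<Rightarrow> nat \<Rightarrow> nat \<Rightarrow> complex" where
  "Rbar_ent q w a b i j =
     (if i = j then (if a = i \<and> b = i then 1 else 0)
      else (if a = i \<and> b = j then (1 - w) * of_real q / (1 - of_real q ^ 2 * w) else 0)
         + (if a = j \<and> b = i then (1 - of_real q ^ 2) * w ^ (if j > i then 1 else 0)
                                   / (1 - of_real q ^ 2 * w) else 0))"

definition tidx :: "nat \<Rightarrow> nat \<Rightarrow> nat list set" where
  "tidx n N = {e. length e = n \<and> set e \<subseteq> {..<N}}"

definition tvecs :: "nat \<Rightarrow> nat \<Rightarrow> (nat list \<Rightarrow> complex) set" where
  "tvecs n N = {X. \<forall>e. e \<notin> tidx n N \<longrightarrow> X e = 0}"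

text \<open>R_{m,l}(w) acting on V^(tensor n) (0-based tensor positions m, l).\<close>
definition Rop :: "real \<Rightarrow> nat \<Rightarrow> nat \<Rightarrow> nat \<Rightarrow> nat \<Rightarrow> complex \<Rightarrow> (nat list \<Rightarrow> complex) \<Rightarrow> (nat list \<Rightarrow> complex)" where
  "Rop q n N m l w X = (\<lambda>e. if e \<in> tidx n N then
      (\<Sum>i<N. \<Sum>j<N. rfun q N w * Rbar_ent q w (e ! m) (e ! l) i j * X (e[m := i, l := j]))
     else 0)"

definition Rinv :: "real \<Rightarrow> nat \<Rightarrow> nat \<Rightarrow> nat \<Rightarrow> nat \<Rightarrow> complex \<Rightarrow> (nat list \<Rightarrow> complex) \<Rightarrow> (nat list \<Rightarrow> complex)" where
  "Rinv q n N m l w = the_inv_into (tvecs n N) (Rop q n N m l w)"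

text \<open>kappa_j with kappa_0 = kappa_N = 1; the operator prod_j kappa_j^{h_j} on slot m.\<close>
definition kapext :: "nat \<Rightarrow> (nat \<Rightarrow> complex) \<Rightarrow> nat \<Rightarrow> complex" where
  "kapext N kap j = (if j = 0 \<or> j = N then 1 else kap j)"

definition Hop :: "nat \<Rightarrow> (nat \<Rightarrow> complex) \<Rightarrow> nat \<Rightarrow> (nat list \<Rightarrow> complex) \<Rightarrow> (nat list \<Rightarrow> complex)" where
  "Hop N kap m X = (\<lambda>e. kapext N kap (Suc (e ! m)) / kapext N kap (e ! m) * X e)"

definition compose_ops :: "('a \<Rightarrow> 'a) list \<Rightarrow> 'a \<Rightarrow> 'a" where
  "compose_ops ops = foldr (\<circ>) ops id"

definition qKZ_op :: "real \<Rightarrow> real \<Rightarrow> nat \<Rightarrow> nat \<Rightarrow> (nat \<Rightarrow> complex) \<Rightarrow> nat \<Rightarrow> (nat \<Rightarrow> complex)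
    \<Rightarrow> (nat list \<Rightarrow> complex) \<Rightarrow> (nat list \<Rightarrow> complex)" where
  "qKZ_op q p n N kap m z = compose_ops
     (map (\<lambda>l. Rop q n N m l (of_real p * z m / z l)) (rev [0..<m])
      @ [Hop N kap m]
      @ map (\<lambda>k. Rinv q n N k m (z k / z m)) (rev [Suc m..<n]))"

text \<open>Generic points: ratios avoid 0 and the lattice q^(2Z) (where the meromorphic
  coefficients may have zeros or poles).\<close>
definition good :: "real \<Rightarrow> complex \<Rightarrow> bool" where
  "good q w \<longleftrightarrow> w \<noteq> 0 \<and> (\<forall>k::int. w \<noteq> of_real (q powi (2 * k)))"

definition generic :: "real \<Rightarrow> real \<Rightarrow> nat \<Rightarrow> (nat \<Rightarrow> complex) \<Rightarrow> bool" where
  "generic q p n z \<longleftrightarrow> torus n z \<and>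
     (\<forall>a<n. \<forall>b<n. a \<noteq> b \<longrightarrow> good q (z a / z b) \<and> good q (of_real p * z a / z b))"

definition qKZ_solution :: "real \<Rightarrow> real \<Rightarrow> nat \<Rightarrow> nat \<Rightarrow> (nat \<Rightarrow> complex)
    \<Rightarrow> ((nat \<Rightarrow> complex) \<Rightarrow> (nat list \<Rightarrow> complex)) \<Rightarrow> bool" where
  "qKZ_solution q p n N kap G \<longleftrightarrow>
     (\<forall>m<n. \<forall>z. generic q p n z \<longrightarrow>
        G (z(m := of_real p * z m)) = qKZ_op q p n N kap m z (G z))"

definition kappa :: "(nat \<Rightarrow> complex) \<Rightarrow> complex \<Rightarrow> nat \<Rightarrow> complex" where
  "kappa c C j = (\<Prod>l<j. c l) / C ^ j"

definition h_num :: "real \<Rightarrow> nat \<Rightarrow> complex \<Rightarrow> complex" where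
  "h_num q N z = qpoch z (of_real q ^ (2*N)) * qpoch (of_real q ^ (2*N) * z) (of_real q ^ (2*N))"

definition h_den :: "bool \<Rightarrow> real \<Rightarrow> nat \<Rightarrow> complex \<Rightarrow> complex" where
  "h_den pos q N z = (if pos then
       qpoch (of_real q ^ 2 * z) (of_real q ^ (2*N)) * qpoch (of_real q ^ (2*N - 2) * z) (of_real q ^ (2*N))
     else
       qpoch (of_real q ^ (2*N + 2) * z) (of_real q ^ (2*N)) * qpoch (inverse (of_real q ^ 2) * z) (of_real q ^ (2*N)))"

definition Kfun :: "complex \<Rightarrow> complex \<Rightarrow> (complex \<Rightarrow> complex) \<Rightarrow> nat \<Rightarrow> (nat \<Rightarrow> complex) \<Rightarrow> complex" where
  "Kfun \<alpha> \<beta> h n z = (\<Prod>a<n. z a powr (\<alpha> + \<beta> * of_nat (Suc a))) *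
      (\<Prod>b<n. \<Prod>a<b. h (z b / z a))"

definition Ffun :: "nat \<Rightarrow> nat \<Rightarrow> (nat \<Rightarrow> nat) \<Rightarrow> (nat list \<Rightarrow> (nat \<Rightarrow> complex) \<Rightarrow> complex)
    \<Rightarrow> (nat \<Rightarrow> complex) \<Rightarrow> (nat list \<Rightarrow> complex)" where
  "Ffun n N d f z = (\<lambda>e. if e \<in> Iset n N d then f e z else 0)"

definition Gfun :: "complex \<Rightarrow> complex \<Rightarrow> (complex \<Rightarrow> complex) \<Rightarrow> nat \<Rightarrow> nat \<Rightarrow> (nat \<Rightarrow> nat)
    \<Rightarrow> (nat list \<Rightarrow> (nat \<Rightarrow> complex) \<Rightarrow> complex) \<Rightarrow> (nat \<Rightarrow> complex) \<Rightarrow> (nat list \<Rightarrow> complex)" where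
  "Gfun \<alpha> \<beta> h n N d f z = (\<lambda>e. Kfun \<alpha> \<beta> h n z * Ffun n N d f z e)"

end

theory Submission
  imports Defs "HOL-Combinatorics.Permutations"
begin

lemma qpoch_conv:
  fixes x z :: complex assumes "norm x < 1"
  shows "convergent_prod (\<lambda>j. 1 - x ^ j * z)"
proof -
  have "summable (\<lambda>i. norm z * norm x ^ i)"
    using assms by (intro summable_mult summable_geometric) auto
  then have "summable (\<lambda>i. norm ((1 - x ^ i * z) - 1))"
    by (simp add: norm_mult norm_power mult.commute)
  then show ?thesis
    by (intro abs_convergent_prod_imp_convergent_prod summable_imp_abs_convergent_prod)
qed

lemma qpoch_nonzero:
  fixes x z :: complex assumes "norm x < 1" "\<And>j. x ^ j * z \<noteq> 1"
  shows "qpoch z x \<noteq> 0"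
  unfolding qpoch_def using assms by (intro prodinf_nonzero qpoch_conv) auto

lemma qpoch_shift:
  fixes x z :: complex assumes "norm x < 1" "z \<noteq> 1"
  shows "qpoch z x = (1 - z) * qpoch (x * z) x"
proof -
  have "(\<Prod>j. 1 - x ^ Suc j * z) = qpoch z x / (1 - x ^ 0 * z)"
    unfolding qpoch_def using assms
    by (intro prodinf_split_head[of "\<lambda>j. 1 - x ^ j * z"] qpoch_conv) auto
  moreover have "(\<lambda>j. 1 - x ^ Suc j * z) = (\<lambda>j. 1 - x ^ j * (x * z))"
    by (auto simp: algebra_simps)
  ultimately show ?thesis using assms unfolding qpoch_def by (simp add: field_simps)
qed

lemma good_ne:
  assumes "good q w" "0 < q" shows "of_real (q powi (2*k)) * w \<noteq> 1"
proof
  assume h: "of_real (q powi (2*k)) * w = 1"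
  from assms have q0: "of_real (q powi (2*k)) \<noteq> (0::complex)"
    using h by auto
  have "w = of_real (q powi (2*(-k)))"
    using h q0 by (simp add: field_simps power_int_minus)
  with assms show False unfolding good_def by blast
qed

lemma good_simps:
  assumes "good q w" "0 < q"
  shows "w \<noteq> 0" "w \<noteq> 1" "w \<noteq> of_real q ^ 2" "of_real q ^ 2 * w \<noteq> 1"
proof -
  show "w \<noteq> 0" using assms unfolding good_def by auto
  show "w \<noteq> 1" using assms unfolding good_def by (metis mult_zero_right of_real_1 power_int_0_right)
  show "w \<noteq> of_real q ^ 2" using assms unfolding good_def
    by (metis mult.right_neutral of_real_power power_int_of_nat of_nat_numeral of_int_numeral)
  show "of_real q ^ 2 * w \<noteq> 1" using good_ne[OF assms(1,2), of 1] by simp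
qed


lemma normq: "0 < q \<Longrightarrow> q < 1 \<Longrightarrow> 1 \<le> N \<Longrightarrow> norm ((of_real q :: complex) ^ (2*N)) < 1"
  by (simp add: norm_power power_less_one_iff)

lemma qpoch_good_nat:
  assumes "good q w" "0 < q" "q < 1" "1 \<le> N"
  shows "qpoch (of_real q ^ (2*a) * w) (of_real q ^ (2*N)) \<noteq> 0"
proof (rule qpoch_nonzero[OF normq[OF assms(2-4)]])
  fix j
  have e: "2 * int (N*j+a) = int (2*(N*j+a))" by simp
  have "(of_real q ^ (2*N)) ^ j * (of_real q ^ (2*a) * w) = of_real q ^ (2*(N*j+a)) * w"
    by (simp add: power_mult[symmetric] power_add[symmetric] mult.assoc algebra_simps)
  also have "\<dots> = of_real (q powi (2 * int (N*j+a))) * w"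
    unfolding e power_int_of_nat by simp
  finally have "(of_real q ^ (2*N)) ^ j * (of_real q ^ (2*a) * w) = of_real (q powi (2 * int (N*j+a))) * w" .
  then show "(of_real q ^ (2*N)) ^ j * (of_real q ^ (2*a) * w) \<noteq> 1"
    using good_ne[OF assms(1,2)] by metis
qed

lemma qpoch_good_inv:
  assumes "good q w" "0 < q" "q < 1" "1 \<le> N"
  shows "qpoch (inverse (of_real q ^ 2) * w) (of_real q ^ (2*N)) \<noteq> 0"
proof (rule qpoch_nonzero[OF normq[OF assms(2-4)]])
  fix j
  have e: "2 * (int (N*j) - 1) = int (2*N*j) - int 2" by simp
  have "q powi (2 * (int (N*j) - 1)) = q ^ (2*N*j) / q ^ 2"
    unfolding e using assms(2) by (simp add: power_int_diff power_int_of_nat del: of_nat_mult)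
  then have "of_real (q powi (2 * (int (N*j) - 1))) * w = (of_real q ^ (2*N)) ^ j * (inverse (of_real q ^ 2) * w)"
    by (simp add: power_mult[symmetric] field_simps)
  then have "(of_real q ^ (2*N)) ^ j * (inverse (of_real q ^ 2) * w) = of_real (q powi (2 * (int (N*j) - 1))) * w" by (rule sym)
  then show "(of_real q ^ (2*N)) ^ j * (inverse (of_real q ^ 2) * w) \<noteq> 1"
    using good_ne[OF assms(1,2)] by metis
qed

lemma h_num_nz:
  assumes "good q w" "0 < q" "q < 1" "1 \<le> N"
  shows "h_num q N w \<noteq> 0"
  using qpoch_good_nat[OF assms, of 0] qpoch_good_nat[OF assms, of N]
  unfolding h_num_def by (simp add: power_mult)

lemma h_den_nz:
  assumes "good q w" "0 < q" "q < 1" "1 \<le> N"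
  shows "h_den pos q N w \<noteq> 0"
proof -
  have a: "(of_real q :: complex) ^ (2*N - 2) = of_real q ^ (2*(N-1))"
    by (simp add: right_diff_distrib')
  have b: "(of_real q :: complex) ^ (2*N + 2) = of_real q ^ (2*(N+1))" by simp
  show ?thesis
  using qpoch_good_nat[OF assms, of 1] qpoch_good_nat[OF assms, of "N-1"] qpoch_good_nat[OF assms, of "N+1"]
    qpoch_good_inv[OF assms]
  unfolding h_den_def a b by (simp add: power_mult)
qed

lemma rfun_nz:
  assumes "good q w" "0 < q" "q < 1" "1 \<le> N"
  shows "rfun q N w \<noteq> 0"
proof -
  have "rfun q N w = of_real (q powr (1 / real N - 1)) * h_den True q N w / h_num q N w"
    unfolding rfun_def h_den_def h_num_def by simp
  then show ?thesis using h_den_nz[OF assms, of True] h_num_nz[OF assms] assms(2) by simp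
qed

lemma rfun_eq: "rfun q N w = of_real (q powr (1 / real N - 1)) * h_den True q N w / h_num q N w"
    unfolding rfun_def h_den_def h_num_def by simp

lemma h_den_rel:
  assumes "good q w" "0 < q" "q < 1" "2 \<le> N"
  shows "h_den False q N w * (1 - of_real q ^ 2 * w) = h_den True q N w * (1 - inverse (of_real q ^ 2) * w)"
proof -
  let ?x = "(of_real q :: complex) ^ (2*N)"
  have nx: "norm ?x < 1" using normq assms by auto
  have q0: "(of_real q :: complex) \<noteq> 0" using assms by auto
  have i1: "inverse (of_real q ^ 2) * w \<noteq> 1"
    using good_simps(3)[OF assms(1,2)] q0 by (auto simp: field_simps)
  have s1: "qpoch (inverse (of_real q ^ 2) * w) ?x = (1 - inverse (of_real q ^ 2) * w) * qpoch (of_real q ^ (2*N-2) * w) ?x"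
  proof -
    have xe: "?x * (inverse (of_real q ^ 2) * w) = of_real q ^ (2*N-2) * w"
    proof -
      have e: "2*N = (2*N-2) + 2" using assms(4) by simp
      have "?x = of_real q ^ (2*N-2) * of_real q ^ 2"
        by (subst e) (simp only: power_add)
      then show ?thesis using q0 by (simp add: field_simps)
    qed
    from qpoch_shift[OF nx i1] show ?thesis unfolding xe .
  qed
  have s2: "qpoch (of_real q ^ 2 * w) ?x = (1 - of_real q ^ 2 * w) * qpoch (of_real q ^ (2*N+2) * w) ?x"
  proof -
    have xe: "?x * (of_real q ^ 2 * w) = of_real q ^ (2*N+2) * w"
      by (simp add: power_add mult.assoc power2_eq_square)
    from qpoch_shift[OF nx good_simps(4)[OF assms(1,2)]] show ?thesis unfolding xe .
  qed
  show ?thesis unfolding h_den_def using s1 s2 by simp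
qed


definition Rb :: "real \<Rightarrow> nat \<Rightarrow> nat \<Rightarrow> nat \<Rightarrow> nat \<Rightarrow> complex \<Rightarrow> (nat list \<Rightarrow> complex) \<Rightarrow> (nat list \<Rightarrow> complex)" where
  "Rb q n N m l w X = (\<lambda>e. if e \<in> tidx n N then
      (\<Sum>i<N. \<Sum>j<N. Rbar_ent q w (e ! m) (e ! l) i j * X (e[m := i, l := j])) else 0)"

definition Perm :: "(nat \<Rightarrow> nat) \<Rightarrow> (nat list \<Rightarrow> complex) \<Rightarrow> (nat list \<Rightarrow> complex)" where
  "Perm \<pi> X = (\<lambda>e. X (permute_list \<pi> e))"

definition sc :: "complex \<Rightarrow> (nat list \<Rightarrow> complex) \<Rightarrow> (nat list \<Rightarrow> complex)" where
  "sc c X = (\<lambda>e. c * X e)"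

lemma Rbar_decomp:
  "Rbar_ent q w a b i j = (if i = a \<and> j = b then Rbar_ent q w a b a b else 0)
     + (if i = b \<and> j = a \<and> a \<noteq> b then Rbar_ent q w a b b a else 0)"
  unfolding Rbar_ent_def by (cases "i = j"; cases "a = b"; cases "i = a"; cases "j = b"; cases "i = b"; simp)

lemma dsum:
  fixes g :: "nat \<Rightarrow> nat \<Rightarrow> complex" and N :: nat
  assumes "a < N" "b < N"
  shows "(\<Sum>i<N. \<Sum>j<N. (if i = a \<and> j = b then c else 0) * g i j) = c * g a b"
proof -
  have "(\<Sum>i<N. \<Sum>j<N. (if i = a \<and> j = b then c else 0) * g i j) = (\<Sum>i<N. if i = a then (\<Sum>j<N. if j = b then c * g i j else 0) else 0)"
  proof (intro sum.cong refl)
    fix i assume "i \<in> {..<N}"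
    have pw: "\<And>j. (if i = a \<and> j = b then c else 0) * g i j = (if i = a then (if j = b then c * g i j else 0) else 0)"
      by auto
    show "(\<Sum>j<N. (if i = a \<and> j = b then c else 0) * g i j) = (if i = a then (\<Sum>j<N. if j = b then c * g i j else 0) else 0)"
      unfolding pw by simp
  qed
  also have "\<dots> = (\<Sum>j<N. if j = b then c * g a j else 0)" using assms(1) by simp
  also have "\<dots> = c * g a b" using assms(2) by simp
  finally show ?thesis .
qed

lemma sum_Rbar:
  fixes g :: "nat \<Rightarrow> nat \<Rightarrow> complex"
  assumes "a < N" "b < N"
  shows "(\<Sum>i<N. \<Sum>j<N. Rbar_ent q w a b i j * g i j) =
    (if a = b then g a a else Rbar_ent q w a b a b * g a b + Rbar_ent q w a b b a * g b a)"
proof -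
  have "(\<Sum>i<N. \<Sum>j<N. Rbar_ent q w a b i j * g i j) =
     (\<Sum>i<N. \<Sum>j<N. (if i = a \<and> j = b then Rbar_ent q w a b a b else 0) * g i j)
   + (\<Sum>i<N. \<Sum>j<N. (if i = b \<and> j = a then (if a \<noteq> b then Rbar_ent q w a b b a else 0) else 0) * g i j)"
    unfolding sum.distrib[symmetric]
    by (intro sum.cong refl, subst Rbar_decomp) (auto simp: distrib_right)
  also have "\<dots> = Rbar_ent q w a b a b * g a b + (if a \<noteq> b then Rbar_ent q w a b b a else 0) * g b a"
    using assms by (simp only: dsum)
  also have "\<dots> = (if a = b then g a a else Rbar_ent q w a b a b * g a b + Rbar_ent q w a b b a * g b a)"
    unfolding Rbar_ent_def by auto
  finally show ?thesis .
qed

lemma tidx_upd: "e \<in> tidx n N \<Longrightarrow> i < N \<Longrightarrow> e[m := i] \<in> tidx n N"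
  unfolding tidx_def by (auto dest: subsetD[OF set_update_subset_insert])

lemma tidx_nth: "e \<in> tidx n N \<Longrightarrow> m < n \<Longrightarrow> e ! m < N"
  unfolding tidx_def using nth_mem by fastforce

lemma Rb_apply:
  assumes "e \<in> tidx n N" "m < n" "l < n" "m \<noteq> l"
  shows "Rb q n N m l w X e = (if e!m = e!l then X e else
     Rbar_ent q w (e!m) (e!l) (e!m) (e!l) * X e + Rbar_ent q w (e!m) (e!l) (e!l) (e!m) * X (e[m := e!l, l := e!m]))"
proof -
  have len: "length e = n" using assms(1) unfolding tidx_def by auto
  have "Rb q n N m l w X e = (\<Sum>i<N. \<Sum>j<N. Rbar_ent q w (e ! m) (e ! l) i j * X (e[m := i, l := j]))"
    using assms unfolding Rb_def by simp
  also have "\<dots> = (if e!m = e!l then X (e[m := e!m, l := e!m]) else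
     Rbar_ent q w (e!m) (e!l) (e!m) (e!l) * X (e[m := e!m, l := e!l]) + Rbar_ent q w (e!m) (e!l) (e!l) (e!m) * X (e[m := e!l, l := e!m]))"
    by (rule sum_Rbar[OF tidx_nth[OF assms(1,2)] tidx_nth[OF assms(1,3)]])
  moreover have "e!m = e!l \<Longrightarrow> e[m := e!l, l := e!l] = e" by (metis list_update_id)
  ultimately show ?thesis by auto
qed

lemma frac2_1: fixes a b c d D1 D2 :: complex
  assumes "D1 \<noteq> 0" "D2 \<noteq> 0" "a*b + c*d = D1*D2" shows "a/D1*(b/D2) + c/D1*(d/D2) = 1"
proof -
  have "a/D1*(b/D2) + c/D1*(d/D2) = (a*b + c*d)/(D1*D2)" by (simp add: add_divide_distrib)
  then show ?thesis using assms by simp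
qed
lemma frac2_0: fixes a b c d D1 D2 :: complex
  assumes "a*b + c*d = 0" shows "a/D1*(b/D2) + c/D1*(d/D2) = 0"
proof -
  have "a/D1*(b/D2) + c/D1*(d/D2) = (a*b + c*d)/(D1*D2)" by (simp add: add_divide_distrib)
  then show ?thesis using assms by simp
qed
lemma inv_forms: fixes x w :: complex assumes "w \<noteq> 0"
  shows "(1 - 1/w) * x / (1 - x^2*(1/w)) = (w - 1) * x / (w - x^2)"
    "(1 - x^2) / (1 - x^2*(1/w)) = (1 - x^2) * w / (w - x^2)"
    "(1 - x^2) * (1/w) / (1 - x^2*(1/w)) = (1 - x^2) / (w - x^2)"
  using assms by (simp_all add: divide_simps)

lemma Rbar_same: "Rbar_ent q w a a a a = 1" unfolding Rbar_ent_def by simp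
lemma Rbar_diag: "a \<noteq> b \<Longrightarrow> Rbar_ent q w a b a b = (1 - w) * of_real q / (1 - of_real q ^ 2 * w)"
  unfolding Rbar_ent_def by simp
lemma Rbar_off: "a \<noteq> b \<Longrightarrow> Rbar_ent q w a b b a = (1 - of_real q ^ 2) * w ^ (if a > b then 1 else 0) / (1 - of_real q ^ 2 * w)"
  unfolding Rbar_ent_def by simp

lemma Rbar_inv_diag: "a \<noteq> b \<Longrightarrow> w \<noteq> 0 \<Longrightarrow> w \<noteq> of_real q ^ 2 \<Longrightarrow>
   Rbar_ent q (1/w) a b a b = (w - 1) * of_real q / (w - of_real q ^ 2)"
  unfolding Rbar_ent_def by (simp add: divide_simps)
lemma Rbar_inv_off: "a \<noteq> b \<Longrightarrow> w \<noteq> 0 \<Longrightarrow> w \<noteq> of_real q ^ 2 \<Longrightarrow>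
   Rbar_ent q (1/w) a b b a = (1 - of_real q ^ 2) * (if a > b then 1 else w) / (w - of_real q ^ 2)"
  unfolding Rbar_ent_def by (simp add: divide_simps)
lemma Rbar_off': "a \<noteq> b \<Longrightarrow> Rbar_ent q w a b b a = (1 - of_real q ^ 2) * (if a > b then w else 1) / (1 - of_real q ^ 2 * w)"
  unfolding Rbar_ent_def by simp

lemma Rb_unit:
  assumes "m < n" "l < n" "m \<noteq> l" "w \<noteq> 0" "w \<noteq> of_real q ^ 2" "of_real q ^ 2 * w \<noteq> 1" "X \<in> tvecs n N"
  shows "Rb q n N m l w (Rb q n N l m (1/w) X) = X"
proof
  fix e
  show "Rb q n N m l w (Rb q n N l m (1/w) X) e = X e"
  proof (cases "e \<in> tidx n N")
    case False
    then show ?thesis using assms(7) unfolding Rb_def tvecs_def by auto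
  next
    case True
    have len: "length e = n" using True unfolding tidx_def by auto
    define a where "a = e!m"
    define b where "b = e!l"
    define e' where "e' = e[m := b, l := a]"
    have e'T: "e' \<in> tidx n N" unfolding e'_def a_def b_def using True assms
      by (intro tidx_upd tidx_nth) auto
    have e'm: "e'!m = b" "e'!l = a" unfolding e'_def using len assms by auto
    have e'e: "e'[l := e'!m, m := e'!l] = e" unfolding e'_def a_def b_def using len assms
      by (simp add: list_update_swap list_update_id)
    have ee': "e[l := e!m, m := e!l] = e'" unfolding e'_def a_def b_def using len assms
      by (simp add: list_update_swap)
    show ?thesis
    proof (cases "a = b")
      case True
      then show ?thesis using \<open>e \<in> tidx n N\<close> assms
        by (simp add: Rb_apply a_def b_def)
    next
      case False
      have q2: "1 - of_real q ^ 2 * w \<noteq> 0" using assms by auto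
      have q3: "1 - of_real q ^ 2 * (1/w) \<noteq> 0" using assms by (auto simp: field_simps)
      have "Rb q n N m l w (Rb q n N l m (1/w) X) e =
         Rbar_ent q w a b a b * (Rbar_ent q (1/w) b a b a * X e + Rbar_ent q (1/w) b a a b * X e')
       + Rbar_ent q w a b b a * (Rbar_ent q (1/w) a b a b * X e' + Rbar_ent q (1/w) a b b a * X e)"
        using False \<open>e \<in> tidx n N\<close> e'T assms e'm e'e ee'
        by (simp add: Rb_apply a_def[symmetric] b_def[symmetric] e'_def[symmetric] eq_commute[of b a])
      also have "\<dots> = X e"
      proof -
        have w2: "w - of_real q ^ 2 \<noteq> 0" using assms by auto
        have gen: "\<And>A Ai Bi1 B Bi2 (X::complex) Y. A*(Ai*X + Bi1*Y) + B*(Ai*Y + Bi2*X) = (A*Ai + B*Bi2)*X + (A*Bi1 + B*Ai)*Y"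
          by (simp add: algebra_simps)
        have c1: "Rbar_ent q w a b a b * Rbar_ent q (1/w) b a b a + Rbar_ent q w a b b a * Rbar_ent q (1/w) a b b a = 1"
        proof (cases "a < b")
          case True
          then have nb: "\<not> b < a" by simp
          show ?thesis using False q2 w2 assms(4,5)
            unfolding if_not_P[OF nb] mult_1_right Rbar_diag[OF False, where w=w] Rbar_off'[OF False, where w=w] Rbar_inv_diag[OF False[symmetric] assms(4,5)] Rbar_inv_off[OF False assms(4,5)]
            by (intro frac2_1) (simp_all add: algebra_simps power2_eq_square True)
        next
          case F: False
          then have nb: "b < a" using False by simp
          show ?thesis using False q2 w2 assms(4,5)
            unfolding if_P[OF nb] mult_1_right Rbar_diag[OF False, where w=w] Rbar_off'[OF False, where w=w] Rbar_inv_diag[OF False[symmetric] assms(4,5)] Rbar_inv_off[OF False assms(4,5)]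
            by (intro frac2_1) (simp_all add: algebra_simps power2_eq_square F)
        qed
        have c2: "Rbar_ent q w a b a b * Rbar_ent q (1/w) b a a b + Rbar_ent q w a b b a * Rbar_ent q (1/w) a b a b = 0"
        proof (cases "a < b")
          case True
          then have nb: "\<not> b < a" by simp
          show ?thesis using False q2 w2 assms(4,5)
            unfolding if_not_P[OF nb] mult_1_right Rbar_diag[OF False, where w=w] Rbar_off'[OF False, where w=w] Rbar_inv_diag[OF False assms(4,5)] Rbar_inv_off[OF False[symmetric] assms(4,5)]
            by (intro frac2_0) (simp_all add: algebra_simps power2_eq_square True)
        next
          case F: False
          then have nb: "b < a" using False by simp
          show ?thesis using False q2 w2 assms(4,5)
            unfolding if_P[OF nb] mult_1_right Rbar_diag[OF False, where w=w] Rbar_off'[OF False, where w=w] Rbar_inv_diag[OF False assms(4,5)] Rbar_inv_off[OF False[symmetric] assms(4,5)]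
            by (intro frac2_0) (simp_all add: algebra_simps power2_eq_square F)
        qed
        note c1 c2
        moreover have "Rbar_ent q (1/w) b a b a = Rbar_ent q (1/w) a b a b"
          using False by (simp add: Rbar_diag)
        ultimately show ?thesis by (simp only: gen) simp
      qed
      finally show ?thesis .
    qed
  qed
qed


lemma tidx_len: "e \<in> tidx n N \<Longrightarrow> length e = n" unfolding tidx_def by auto

lemma perm_tidx:
  assumes "\<pi> permutes {..<n}"
  shows "(permute_list \<pi> e \<in> tidx n N) = (e \<in> tidx n N)"
proof (cases "length e = n")
  case True
  then have "set (permute_list \<pi> e) = set e" using assms by (intro set_permute_list) auto
  then show ?thesis unfolding tidx_def using True by simp
next
  case False
  then show ?thesis unfolding tidx_def by simp
qed

lemma Perm_tvecs: "\<pi> permutes {..<n} \<Longrightarrow> X \<in> tvecs n N \<Longrightarrow> Perm \<pi> X \<in> tvecs n N"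
  unfolding tvecs_def Perm_def using perm_tidx by blast

lemma Rb_tvecs: "Rb q n N m l w X \<in> tvecs n N"
  unfolding tvecs_def Rb_def by auto

lemma Hop_tvecs: "X \<in> tvecs n N \<Longrightarrow> Hop N kap m X \<in> tvecs n N"
  unfolding tvecs_def Hop_def by auto

lemma sc_tvecs: "X \<in> tvecs n N \<Longrightarrow> sc c X \<in> tvecs n N"
  unfolding tvecs_def sc_def by auto

lemma Rb_sc: "Rb q n N m l w (sc c X) = sc c (Rb q n N m l w X)"
  unfolding Rb_def sc_def by (auto simp: sum_distrib_left algebra_simps)

lemma Hop_sc: "Hop N kap m (sc c X) = sc c (Hop N kap m X)"
  unfolding Hop_def sc_def by (auto simp: algebra_simps)

lemma Perm_sc: "Perm \<pi> (sc c X) = sc c (Perm \<pi> X)"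
  unfolding Perm_def sc_def by auto

lemma sc_sc: "sc a (sc b X) = sc (a*b) X"
  unfolding sc_def by auto

lemma sc_1: "sc 1 X = X" unfolding sc_def by auto

lemma Perm_comp:
  assumes "\<pi> permutes {..<n}" "X \<in> tvecs n N" "\<sigma> permutes {..<n}"
  shows "Perm \<pi> (Perm \<sigma> X) = Perm (\<pi> \<circ> \<sigma>) X"
proof
  fix e
  show "Perm \<pi> (Perm \<sigma> X) e = Perm (\<pi> \<circ> \<sigma>) X e"
  proof (cases "length e = n")
    case True
    then show ?thesis unfolding Perm_def using assms(1,3) permute_list_compose[where f=\<pi> and g=\<sigma> and xs=e] by simp
  next
    case False
    then have "permute_list \<sigma> (permute_list \<pi> e) \<notin> tidx n N" "permute_list (\<pi> \<circ> \<sigma>) e \<notin> tidx n N"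
      unfolding tidx_def by auto
    then show ?thesis using assms(2) unfolding Perm_def tvecs_def by auto
  qed
qed

lemma permute_list_upd2:
  assumes "\<pi> permutes {..<n}" "length e = n" "m < n" "l < n"
  shows "permute_list \<pi> (e[\<pi> m := i, \<pi> l := j]) = (permute_list \<pi> e)[m := i, l := j]"
proof (rule nth_equalityI)
  show "length (permute_list \<pi> (e[\<pi> m := i, \<pi> l := j])) = length ((permute_list \<pi> e)[m := i, l := j])" by simp
next
  fix x assume "x < length (permute_list \<pi> (e[\<pi> m := i, \<pi> l := j]))"
  then have x: "x < n" using assms by simp
  have px: "\<pi> x < n" using permutes_in_image[OF assms(1)] x by auto
  have inj: "\<pi> x = \<pi> y \<longleftrightarrow> x = y" "\<pi> y = \<pi> x \<longleftrightarrow> y = x" for y using permutes_inj[OF assms(1)] by (auto dest: injD)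
  show "permute_list \<pi> (e[\<pi> m := i, \<pi> l := j]) ! x = (permute_list \<pi> e)[m := i, l := j] ! x"
    using x px assms by (simp add: permute_list_nth nth_list_update inj)
qed

lemma Perm_Rb:
  assumes "\<pi> permutes {..<n}" "m < n" "l < n"
  shows "Perm \<pi> (Rb q n N m l w X) = Rb q n N (\<pi> m) (\<pi> l) w (Perm \<pi> X)"
proof
  fix e
  show "Perm \<pi> (Rb q n N m l w X) e = Rb q n N (\<pi> m) (\<pi> l) w (Perm \<pi> X) e"
  proof (cases "e \<in> tidx n N")
    case True
    have len: "length e = n" using True by (rule tidx_len)
    have "Perm \<pi> (Rb q n N m l w X) e = (\<Sum>i<N. \<Sum>j<N. Rbar_ent q w (e ! \<pi> m) (e ! \<pi> l) i j * X ((permute_list \<pi> e)[m := i, l := j]))"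
      unfolding Perm_def Rb_def using True perm_tidx[OF assms(1)] len assms by (simp add: permute_list_nth)
    also have "\<dots> = Rb q n N (\<pi> m) (\<pi> l) w (Perm \<pi> X) e"
      unfolding Perm_def Rb_def using True permute_list_upd2[OF assms(1) len assms(2,3)] by simp
    finally show ?thesis .
  next
    case False
    then show ?thesis unfolding Perm_def Rb_def using perm_tidx[OF assms(1)] by simp
  qed
qed

lemma Perm_Hop:
  assumes "\<pi> permutes {..<n}" "m < n" "X \<in> tvecs n N"
  shows "Perm \<pi> (Hop N kap m X) = Hop N kap (\<pi> m) (Perm \<pi> X)"
proof
  fix e
  show "Perm \<pi> (Hop N kap m X) e = Hop N kap (\<pi> m) (Perm \<pi> X) e"
  proof (cases "length e = n")
    case True
    then show ?thesis unfolding Perm_def Hop_def using assms by (simp add: permute_list_nth)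
  next
    case False
    then have "permute_list \<pi> e \<notin> tidx n N" unfolding tidx_def by auto
    then show ?thesis using assms(3) unfolding Perm_def Hop_def tvecs_def by auto
  qed
qed

lemma compose_ops_Nil[simp]: "compose_ops [] X = X" unfolding compose_ops_def by simp
lemma compose_ops_Cons[simp]: "compose_ops (f # fs) X = f (compose_ops fs X)" unfolding compose_ops_def by simp
lemma compose_ops_append: "compose_ops (xs @ ys) X = compose_ops xs (compose_ops ys X)"
  by (induction xs) auto

definition okop :: "nat \<Rightarrow> nat \<Rightarrow> ((nat list \<Rightarrow> complex) \<Rightarrow> (nat list \<Rightarrow> complex)) \<Rightarrow> bool" where
  "okop n N A \<longleftrightarrow> (\<forall>X\<in>tvecs n N. A X \<in> tvecs n N \<and> (\<forall>c. A (sc c X) = sc c (A X)))"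

lemma okop_Rb: "okop n N (Rb q n N m l w)" unfolding okop_def by (simp add: Rb_tvecs Rb_sc)
lemma okop_Hop: "okop n N (Hop N kap m)" unfolding okop_def by (simp add: Hop_tvecs Hop_sc)

lemma compose_ok:
  assumes "\<forall>A\<in>set L. okop n N A" "X \<in> tvecs n N"
  shows "compose_ops L X \<in> tvecs n N" "compose_ops L (sc c X) = sc c (compose_ops L X)"
  using assms by (induction L) (auto simp: okop_def)

lemma compose_Perm:
  assumes "list_all2 (\<lambda>A B. \<forall>X\<in>tvecs n N. Perm \<pi> (A X) = B (Perm \<pi> X)) L1 L2"
    "\<forall>A\<in>set L1. okop n N A" "X \<in> tvecs n N"
  shows "Perm \<pi> (compose_ops L1 X) = compose_ops L2 (Perm \<pi> X)"
  using assms
proof (induction L1 L2 rule: list_all2_induct)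
  case Nil
  then show ?case by simp
next
  case (Cons A L1 B L2)
  have "compose_ops L1 X \<in> tvecs n N" using Cons compose_ok by auto
  then show ?case using Cons by simp
qed

lemma compose_scal:
  assumes "\<forall>i\<in>set I. \<forall>X\<in>tvecs n N. f i X = sc (s i) (g i X)" "\<forall>i\<in>set I. okop n N (g i)"
    "X \<in> tvecs n N"
  shows "compose_ops (map f I) X = sc (prod_list (map s I)) (compose_ops (map g I) X)"
  using assms
proof (induction I)
  case Nil
  then show ?case by (simp add: sc_1)
next
  case (Cons i I)
  have t: "compose_ops (map g I) X \<in> tvecs n N" using Cons by (intro compose_ok) auto
  have "compose_ops (map f (i # I)) X = f i (sc (prod_list (map s I)) (compose_ops (map g I) X))"
    using Cons by simp
  also have "\<dots> = sc (s i) (g i (sc (prod_list (map s I)) (compose_ops (map g I) X)))"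
    using Cons t by (simp add: sc_tvecs)
  also have "\<dots> = sc (s i * prod_list (map s I)) (g i (compose_ops (map g I) X))"
    using Cons t by (simp add: okop_def sc_sc)
  finally show ?case by simp
qed


lemma lin_mult: fixes S A R t c k m :: complex
  assumes "t*S + c*(S - A) = R" "k*c = m" shows "(k*t + m)*S = k*R + m*A"
proof -
  have "k*(t*S + c*(S - A)) = k*R" using assms(1) by simp
  then show ?thesis using assms(2) by (simp add: algebra_simps)
qed

lemma kc: fixes x u :: complex assumes "x \<noteq> 0" "u - 1 \<noteq> 0"
  shows "(x*(u-1)) * ((x - inverse x)/(u - 1)) = x^2 - 1"
    "(x*(u-1)) * ((- inverse x - inverse (- inverse x))/(u - 1)) = x^2 - 1"
  using assms by (simp_all add: field_simps power2_eq_square)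

lemma solve_div1: fixes D S a b A B :: complex
  assumes "D \<noteq> 0" "D*S = a*B + b*A" shows "S = a/D*B + b/D*A"
proof -
  have "S = (a*B + b*A)/D" using assms by (simp add: eq_divide_eq mult.commute)
  then show ?thesis by (simp add: add_divide_distrib)
qed

lemma solve_div2: fixes D G S a b A B :: complex
  assumes "D \<noteq> 0" "G \<noteq> 0" "G*S = a*B + b*A" shows "S = D/G*(a/D*B + b/D*A)"
proof -
  have "S = (a*B + b*A)/G" using assms by (simp add: eq_divide_eq mult.commute)
  moreover have "D/G*(a/D*B + b/D*A) = (a*B + b*A)/G" using assms(1,2) by (simp add: field_simps)
  ultimately show ?thesis by metis
qed

lemma alg_eq_pos: fixes x u S A :: complex
  assumes "x \<noteq> 0" "u - 1 \<noteq> 0" "1 - x^2*u \<noteq> 0" "x*S + (x - inverse x)/(u - 1)*(S - A) = x*A"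
  shows "S = A"
proof -
  have "((x*(u-1))*x + (x^2 - 1))*S = (x*(u-1))*(x*A) + (x^2-1)*A"
    by (rule lin_mult[OF assms(4) kc(1)[OF assms(1,2)]])
  then have "(x^2*u - 1)*S = (x^2*u - 1)*A" by (simp add: algebra_simps power2_eq_square)
  moreover have "x^2*u - 1 \<noteq> 0" using assms(3) by (simp add: algebra_simps)
  ultimately show ?thesis by simp
qed

lemma alg_eq_neg: fixes x u S A :: complex
  assumes "x \<noteq> 0" "u - 1 \<noteq> 0" "u - x^2 \<noteq> 0"
   "(- inverse x)*S + (- inverse x - inverse (- inverse x))/(u - 1)*(S - A) = - inverse (- inverse x) * A"
  shows "S = (1 - x^2*u)/(u - x^2) * A"
proof -
  have "((x*(u-1))*(- inverse x) + (x^2 - 1))*S = (x*(u-1))*(- inverse (- inverse x) * A) + (x^2-1)*A"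
    by (rule lin_mult[OF assms(4) kc(2)[OF assms(1,2)]])
  then have "(x^2 - u)*S = (x^2*u - 1)*A" using assms(1) by (simp add: algebra_simps power2_eq_square)
  then have "(u - x^2)*S = (1 - x^2*u)*A" by (simp add: algebra_simps)
  then show ?thesis using assms(3) by (simp add: field_simps)
qed

lemma alg_gt_pos: fixes x u S A B :: complex
  assumes "x \<noteq> 0" "u - 1 \<noteq> 0" "1 - x^2*u \<noteq> 0" "x*S + (x - inverse x)/(u - 1)*(S - A) = B"
  shows "S = (1 - u) * x / (1 - x^2*u) * B + (1 - x^2) / (1 - x^2*u) * A"
proof -
  have "((x*(u-1))*x + (x^2 - 1))*S = (x*(u-1))*B + (x^2-1)*A"
    by (rule lin_mult[OF assms(4) kc(1)[OF assms(1,2)]])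
  then have "(1 - x^2*u)*S = (1-u)*x*B + (1-x^2)*A" by (simp add: algebra_simps power2_eq_square)
  then show ?thesis using assms(3) by (rule solve_div1[rotated])
qed

lemma alg_gt_neg: fixes x u S A B :: complex
  assumes "x \<noteq> 0" "u - 1 \<noteq> 0" "u - x^2 \<noteq> 0" "1 - x^2*u \<noteq> 0"
   "(- inverse x)*S + (- inverse x - inverse (- inverse x))/(u - 1)*(S - A) = B"
  shows "S = (1 - x^2*u)/(u - x^2) * ((1 - u) * x / (1 - x^2*u) * B + (1 - x^2) / (1 - x^2*u) * A)"
proof -
  have "((x*(u-1))*(- inverse x) + (x^2 - 1))*S = (x*(u-1))*B + (x^2-1)*A"
    by (rule lin_mult[OF assms(5) kc(2)[OF assms(1,2)]])
  then have "(u - x^2)*S = (1-u)*x*B + (1-x^2)*A" using assms(1) by (simp add: algebra_simps power2_eq_square)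
  then show ?thesis using assms(3,4) by (intro solve_div2) auto
qed

lemma cprime: fixes x u :: complex assumes "x \<noteq> 0" "u \<noteq> 0" "1 - u \<noteq> 0"
  shows "(x - inverse x)/(1/u - 1) = (x^2 - 1)*u/(x*(1-u))"
    "(- inverse x - inverse (- inverse x))/(1/u - 1) = (x^2 - 1)*u/(x*(1-u))"
  using assms by (simp_all add: field_simps power2_eq_square)

lemma alg_lt_pos0: fixes x u A B D :: complex
  assumes "x \<noteq> 0" "u \<noteq> 0" "1 - u \<noteq> 0" "D \<noteq> 0" "D = 1 - x^2*u"
  shows "x*B + (x^2 - 1)*u/(x*(1-u))*(B - 1*((1-u)*x/D*A + (1-x^2)/D*B)) = 1*((1-u)*x/D*B + (1-x^2)*u/D*A)"
proof -
  have "x*B + (x^2 - 1)*u/(x*(1-u))*(B - 1*((1-u)*x/D*A + (1-x^2)/D*B)) = (x*x*(1-u)*D*B + (x^2 - 1)*u*(D*B - (1-u)*x*A - (1-x^2)*B))/(x*(1-u)*D)"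
    using assms(1-4) by (simp add: field_simps)
  also have "(x*x*(1-u)*D*B + (x^2 - 1)*u*(D*B - (1-u)*x*A - (1-x^2)*B)) = x*(1-u)*((1-u)*x*B + (1-x^2)*u*A)"
    unfolding assms(5) by (simp add: algebra_simps power2_eq_square)
  also have "x*(1-u)*((1-u)*x*B + (1-x^2)*u*A)/(x*(1-u)*D) = 1*((1-u)*x/D*B + (1-x^2)*u/D*A)"
    using assms(1-4) by (simp add: field_simps)
  finally show ?thesis .
qed

lemma alg_lt_neg0: fixes x u A B D G :: complex
  assumes "x \<noteq> 0" "u \<noteq> 0" "1 - u \<noteq> 0" "D \<noteq> 0" "G \<noteq> 0" "G = u - x^2"
  shows "- inverse x*B + (x^2 - 1)*u/(x*(1-u))*(B - D/G*((1-u)*x/D*A + (1-x^2)/D*B)) = D/G*((1-u)*x/D*B + (1-x^2)*u/D*A)"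
proof -
  have "- inverse x*B + (x^2 - 1)*u/(x*(1-u))*(B - D/G*((1-u)*x/D*A + (1-x^2)/D*B)) = (- (1-u)*G*B + (x^2 - 1)*u*(G*B - (1-u)*x*A - (1-x^2)*B))/(x*(1-u)*G)"
    using assms(1-5) by (simp add: field_simps)
  also have "(- (1-u)*G*B + (x^2 - 1)*u*(G*B - (1-u)*x*A - (1-x^2)*B)) = x*(1-u)*((1-u)*x*B + (1-x^2)*u*A)"
    unfolding assms(6) by (simp add: algebra_simps power2_eq_square)
  also have "x*(1-u)*((1-u)*x*B + (1-x^2)*u*A)/(x*(1-u)*G) = D/G*((1-u)*x/D*B + (1-x^2)*u/D*A)"
    using assms(1-5) by (simp add: field_simps)
  finally show ?thesis .
qed

lemma Iset_mset: "mset e' = mset e \<Longrightarrow> (e' \<in> Iset n N d) = (e \<in> Iset n N d)"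
  unfolding Iset_def by (auto simp: count_mset[symmetric] dest: mset_eq_setD mset_eq_length)

lemma Iset_tidx: "e \<in> Iset n N d \<Longrightarrow> e \<in> tidx n N"
  unfolding Iset_def tidx_def by auto

lemma Iset_len: "e \<in> Iset n N d \<Longrightarrow> length e = n"
  unfolding Iset_def by auto

lemma Iset_perm: "\<pi> permutes {..<n} \<Longrightarrow> (permute_list \<pi> e \<in> Iset n N d) = (e \<in> Iset n N d)"
proof (cases "length e = n")
  case True
  assume "\<pi> permutes {..<n}"
  then show ?thesis using True by (intro Iset_mset mset_permute_list) auto
next
  case False
  then show ?thesis unfolding Iset_def by auto
qed

lemma Ffun_tvecs: "Ffun n N d f z \<in> tvecs n N"
  unfolding tvecs_def Ffun_def using Iset_tidx by auto

lemma permute_swap: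
  assumes "Suc k < length e"
  shows "permute_list (Transposition.transpose k (Suc k)) e = e[k := e!Suc k, Suc k := e!k]"
  by (rule nth_equalityI) (use assms in \<open>auto simp: permute_list_def nth_list_update Transposition.transpose_def\<close>)

lemma swapz_swapz: "swapz k (swapz k y) = y"
  unfolding swapz_def by auto

lemma swapz_app: "swapz k y k = y (Suc k)" "swapz k y (Suc k) = y k"
  "i \<noteq> k \<Longrightarrow> i \<noteq> Suc k \<Longrightarrow> swapz k y i = y i"
  unfolding swapz_def by auto

lemma torus_swapz: "Suc k < n \<Longrightarrow> torus n y \<Longrightarrow> torus n (swapz k y)"
  unfolding torus_def swapz_def by auto

lemma transpose_permutes: "Suc k < n \<Longrightarrow> Transposition.transpose k (Suc k) permutes {..<n}"
  by (rule permutes_swap_id) auto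

locale setting =
  fixes n N :: nat and q p :: real and t12 :: complex and pos :: bool and d :: "nat \<Rightarrow> nat"
    and c :: "nat \<Rightarrow> complex" and f :: "nat list \<Rightarrow> (nat \<Rightarrow> complex) \<Rightarrow> complex" and C :: complex
  assumes N2: "2 \<le> N" and Nn: "N \<le> n" and q0: "0 < q" and q1: "q < 1" and p0: "0 < p" and t0: "t12 \<noteq> 0"
    and fam: "qKZ_family pos t12 p n N d c f"
    and trel: "if pos then t12 = of_real q else of_real q = - inverse t12"
    and cprod: "(\<Prod>l<N. c l) \<noteq> 0" and CN: "C ^ N = (\<Prod>l<N. c l)"
begin

definition phi :: "complex \<Rightarrow> complex" where
  "phi u = (if pos then 1 else (1 - of_real q ^ 2 * u) / (u - of_real q ^ 2))"

abbreviation F where "F \<equiv> Ffun n N d f"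

lemma qc0: "(of_real q :: complex) \<noteq> 0" using q0 by simp

lemma t12_neg: "\<not> pos \<Longrightarrow> t12 = - inverse (of_real q)"
proof -
  assume "\<not> pos"
  then have h: "of_real q = - inverse t12" using trel by simp
  have "inverse (of_real q) = - t12" unfolding h by simp
  then show ?thesis by simp
qed

lemma phi_nz: "good q u \<Longrightarrow> phi u \<noteq> 0"
proof -
  assume "good q u"
  then have "u \<noteq> of_real q ^ 2" "of_real q ^ 2 * u \<noteq> 1" using good_simps q0 by auto
  then show ?thesis unfolding phi_def by auto
qed

lemma fam_eq: "e \<in> Iset n N d \<Longrightarrow> Suc i < n \<Longrightarrow> e!i = e!Suc i \<Longrightarrow> torus n z \<Longrightarrow> z i \<noteq> z (Suc i) \<Longrightarrow>
   DL t12 i (f e) z = (if pos then t12 else - inverse t12) * f e z"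
proof -
  assume a: "e \<in> Iset n N d" "Suc i < n" "e!i = e!Suc i" "torus n z" "z i \<noteq> z (Suc i)"
  note H = conjunct1[OF conjunct2[OF fam[unfolded qKZ_family_def]]]
  from H a(1) have "\<forall>i. Suc i < n \<and> e ! i = e ! Suc i \<longrightarrow>
        (\<forall>z. torus n z \<and> z i \<noteq> z (Suc i) \<longrightarrow>
           DL t12 i (f e) z = (if pos then t12 else - inverse t12) * f e z)" by (rule bspec)
  then show ?thesis using a(2-5) by blast
qed

lemma fam_gt: "e \<in> Iset n N d \<Longrightarrow> Suc i < n \<Longrightarrow> e!i > e!Suc i \<Longrightarrow> torus n z \<Longrightarrow> z i \<noteq> z (Suc i) \<Longrightarrow>
   DL t12 i (f e) z = f (e[i := e ! Suc i, Suc i := e ! i]) z"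
proof -
  assume a: "e \<in> Iset n N d" "Suc i < n" "e!i > e!Suc i" "torus n z" "z i \<noteq> z (Suc i)"
  note H = conjunct1[OF conjunct2[OF conjunct2[OF fam[unfolded qKZ_family_def]]]]
  from H a(1) have "\<forall>i. Suc i < n \<and> e ! i > e ! Suc i \<longrightarrow>
        (\<forall>z. torus n z \<and> z i \<noteq> z (Suc i) \<longrightarrow>
           DL t12 i (f e) z = f (e[i := e ! Suc i, Suc i := e ! i]) z)" by (rule bspec)
  then show ?thesis using a(2-5) by blast
qed

lemma fam_cyc: "e \<in> Iset n N d \<Longrightarrow> torus n z \<Longrightarrow>
   omega p n (f (last e # butlast e)) z = c (last e) * f e z"
proof -
  assume a: "e \<in> Iset n N d" "torus n z"
  note H = conjunct2[OF conjunct2[OF conjunct2[OF fam[unfolded qKZ_family_def]]]]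
  from H a(1) have "\<forall>z. torus n z \<longrightarrow>
        omega p n (f (last e # butlast e)) z = c (last e) * f e z" by (rule bspec)
  then show ?thesis using a(2) by blast
qed

lemma exch_gt:
  assumes "Suc k < n" "torus n y" "good q (y k / y (Suc k))" "e \<in> Iset n N d" "e!k > e!Suc k"
  shows "f e (swapz k y) = phi (y k / y (Suc k)) *
     ((1 - y k / y (Suc k)) * of_real q / (1 - of_real q ^ 2 * (y k / y (Suc k))) * f (e[k := e!Suc k, Suc k := e!k]) y
      + (1 - of_real q ^ 2) / (1 - of_real q ^ 2 * (y k / y (Suc k))) * f e y)"
proof -
  define u where "u = y k / y (Suc k)"
  have g: "u \<noteq> 0" "u \<noteq> 1" "u \<noteq> of_real q ^ 2" "of_real q ^ 2 * u \<noteq> 1"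
    using good_simps[OF assms(3)[folded u_def] q0] by auto
  have yne: "y k \<noteq> y (Suc k)" using g(1,2) unfolding u_def by auto
  have h: "DL t12 k (f e) y = f (e[k := e!Suc k, Suc k := e!k]) y"
    by (rule fam_gt[OF assms(4,1,5,2) yne])
  then have h': "t12 * f e (swapz k y) + (t12 - inverse t12) / (u - 1) * (f e (swapz k y) - f e y)
      = f (e[k := e!Suc k, Suc k := e!k]) y"
    unfolding DL_def u_def .
  have u1: "u - 1 \<noteq> 0" "1 - of_real q ^ 2 * u \<noteq> 0" "u - of_real q ^ 2 \<noteq> 0" using g by auto
  have "f e (swapz k y) = phi u *
     ((1 - u) * of_real q / (1 - of_real q ^ 2 * u) * f (e[k := e!Suc k, Suc k := e!k]) y
      + (1 - of_real q ^ 2) / (1 - of_real q ^ 2 * u) * f e y)"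
  proof (cases pos)
    case True
    then have tq: "t12 = of_real q" using trel by simp
    have "phi u = 1" unfolding phi_def using True by simp
    then show ?thesis using alg_gt_pos[OF qc0 u1(1,2) h'[unfolded tq]] by (simp only: mult_1_left)
  next
    case False
    have "phi u = (1 - of_real q ^ 2 * u) / (u - of_real q ^ 2)" unfolding phi_def using False by simp
    then show ?thesis using alg_gt_neg[OF qc0 u1(1,3,2) h'[unfolded t12_neg[OF False]]] by (simp only:)
  qed
  then show ?thesis unfolding u_def .
qed

end

context setting begin

lemma exch_eq:
  assumes "Suc k < n" "torus n y" "good q (y k / y (Suc k))" "e \<in> Iset n N d" "e!k = e!Suc k"
  shows "f e (swapz k y) = phi (y k / y (Suc k)) * f e y"
proof -
  define u where "u = y k / y (Suc k)"
  have g: "u \<noteq> 0" "u \<noteq> 1" "u \<noteq> of_real q ^ 2" "of_real q ^ 2 * u \<noteq> 1"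
    using good_simps[OF assms(3)[folded u_def] q0] by auto
  have yne: "y k \<noteq> y (Suc k)" using g(1,2) unfolding u_def by auto
  have h: "DL t12 k (f e) y = (if pos then t12 else - inverse t12) * f e y"
    by (rule fam_eq[OF assms(4,1,5,2) yne])
  then have h': "t12 * f e (swapz k y) + (t12 - inverse t12) / (u - 1) * (f e (swapz k y) - f e y)
      = (if pos then t12 else - inverse t12) * f e y"
    unfolding DL_def u_def .
  have u1: "u - 1 \<noteq> 0" "1 - of_real q ^ 2 * u \<noteq> 0" "u - of_real q ^ 2 \<noteq> 0" using g by auto
  have "f e (swapz k y) = phi u * f e y"
  proof (cases pos)
    case True
    then have tq: "t12 = of_real q" using trel by simp
    have "phi u = 1" unfolding phi_def using True by simp
    have "f e (swapz k y) = f e y"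
      by (rule alg_eq_pos[OF qc0 u1(1,2) h'[unfolded if_P[OF True] tq]])
    then show ?thesis using \<open>phi u = 1\<close> by simp
  next
    case False
    have "phi u = (1 - of_real q ^ 2 * u) / (u - of_real q ^ 2)" unfolding phi_def using False by simp
    have "f e (swapz k y) = (1 - of_real q ^ 2 * u) / (u - of_real q ^ 2) * f e y"
      by (rule alg_eq_neg[OF qc0 u1(1,3) h'[unfolded if_not_P[OF False] t12_neg[OF False]]])
    then show ?thesis using \<open>phi u = _\<close> by simp
  qed
  then show ?thesis unfolding u_def .
qed

lemma exch_lt:
  assumes "Suc k < n" "torus n y" "good q (y k / y (Suc k))" "e \<in> Iset n N d" "e!k < e!Suc k"
  shows "f e (swapz k y) = phi (y k / y (Suc k)) *
     ((1 - y k / y (Suc k)) * of_real q / (1 - of_real q ^ 2 * (y k / y (Suc k))) * f (e[k := e!Suc k, Suc k := e!k]) y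
      + (1 - of_real q ^ 2) * (y k / y (Suc k)) / (1 - of_real q ^ 2 * (y k / y (Suc k))) * f e y)"
proof -
  define u where "u = y k / y (Suc k)"
  define se where "se = e[k := e!Suc k, Suc k := e!k]"
  have g: "u \<noteq> 0" "u \<noteq> 1" "u \<noteq> of_real q ^ 2" "of_real q ^ 2 * u \<noteq> 1"
    using good_simps[OF assms(3)[folded u_def] q0] by auto
  have yk: "y k \<noteq> 0" "y (Suc k) \<noteq> 0" using assms(1,2) unfolding torus_def by auto
  have len: "length e = n" using assms(4) by (rule Iset_len)
  have seI: "se \<in> Iset n N d"
    unfolding se_def using Iset_perm[OF transpose_permutes[OF assms(1)], where e=e and N=N and d=d] permute_swap[of k e] len assms(1,4)
    by simp
  have se_nth: "se!k = e!Suc k" "se!Suc k = e!k" unfolding se_def using len assms(1) by auto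
  have se_back: "se[k := se!Suc k, Suc k := se!k] = e" unfolding se_def using len assms(1)
    by (simp add: list_update_swap list_update_id)
  have tor': "torus n (swapz k y)" by (rule torus_swapz[OF assms(1,2)])
  have yne': "swapz k y k \<noteq> swapz k y (Suc k)" using g(1,2) unfolding u_def swapz_app by auto
  have h: "DL t12 k (f se) (swapz k y) = f e (swapz k y)"
    using fam_gt[OF seI assms(1) _ tor' yne'] se_nth se_back assms(5) by simp
  have ratio: "swapz k y k / swapz k y (Suc k) = 1/u" unfolding swapz_app u_def by simp
  have gt: "f se (swapz k y) = phi u *
     ((1 - u) * of_real q / (1 - of_real q ^ 2 * u) * f e y + (1 - of_real q ^ 2) / (1 - of_real q ^ 2 * u) * f se y)"
    using exch_gt[OF assms(1-3) seI] se_nth se_back assms(5) unfolding u_def by simp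
  have h': "t12 * f se y + (t12 - inverse t12) / (1/u - 1) * (f se y - f se (swapz k y)) = f e (swapz k y)"
    using h unfolding DL_def swapz_swapz ratio .
  have u1: "1 - u \<noteq> 0" "1 - of_real q ^ 2 * u \<noteq> 0" "u - of_real q ^ 2 \<noteq> 0" using g by auto
  have "f e (swapz k y) = phi u *
     ((1 - u) * of_real q / (1 - of_real q ^ 2 * u) * f se y
      + (1 - of_real q ^ 2) * u / (1 - of_real q ^ 2 * u) * f e y)"
  proof (cases pos)
    case True
    then have tq: "t12 = of_real q" using trel by simp
    have p1: "phi u = 1" unfolding phi_def using True by simp
    have "f e (swapz k y) = of_real q * f se y + ((of_real q)^2 - 1)*u/(of_real q*(1-u)) * (f se y - f se (swapz k y))"
      using h'[unfolded tq cprime(1)[OF qc0 g(1) u1(1)]] by (rule sym)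
    also have "\<dots> = of_real q * f se y + ((of_real q)^2 - 1)*u/(of_real q*(1-u)) * (f se y - 1 *
       ((1 - u) * of_real q / (1 - of_real q ^ 2 * u) * f e y + (1 - of_real q ^ 2) / (1 - of_real q ^ 2 * u) * f se y))"
      unfolding gt[unfolded p1] ..
    also have "\<dots> = 1 * ((1 - u) * of_real q / (1 - of_real q ^ 2 * u) * f se y
      + (1 - of_real q ^ 2) * u / (1 - of_real q ^ 2 * u) * f e y)"
      by (rule alg_lt_pos0[OF qc0 g(1) u1(1,2) refl])
    finally show ?thesis unfolding p1 .
  next
    case False
    define G where "G = (1 - of_real q ^ 2 * u) / (u - of_real q ^ 2)"
    have p1: "phi u = G" unfolding phi_def G_def using False by simp
    have "f e (swapz k y) = - inverse (of_real q) * f se y + ((of_real q)^2 - 1)*u/(of_real q*(1-u)) * (f se y - f se (swapz k y))"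
      using h'[unfolded t12_neg[OF False] cprime(2)[OF qc0 g(1) u1(1)]] by (rule sym)
    also have "\<dots> = - inverse (of_real q) * f se y + ((of_real q)^2 - 1)*u/(of_real q*(1-u)) * (f se y - G *
       ((1 - u) * of_real q / (1 - of_real q ^ 2 * u) * f e y + (1 - of_real q ^ 2) / (1 - of_real q ^ 2 * u) * f se y))"
      unfolding gt[unfolded p1] ..
    also have "\<dots> = G * ((1 - u) * of_real q / (1 - of_real q ^ 2 * u) * f se y
      + (1 - of_real q ^ 2) * u / (1 - of_real q ^ 2 * u) * f e y)"
      unfolding G_def by (rule alg_lt_neg0[OF qc0 g(1) u1(1,2,3) refl])
    finally show ?thesis unfolding p1 .
  qed
  then show ?thesis unfolding u_def se_def .
qed

end

context setting begin

lemma F_zero: "e \<notin> Iset n N d \<Longrightarrow> F y e = 0" unfolding Ffun_def by simp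
lemma F_in: "e \<in> Iset n N d \<Longrightarrow> F y e = f e y" unfolding Ffun_def by simp

lemma exch_vec:
  assumes "Suc k < n" "torus n y" "good q (y k / y (Suc k))"
  shows "F (swapz k y) = sc (phi (y k / y (Suc k)))
     (Perm (Transposition.transpose k (Suc k)) (Rb q n N k (Suc k) (y k / y (Suc k)) (F y)))"
proof
  fix e :: "nat list"
  define u where "u = y k / y (Suc k)"
  define \<tau> where "\<tau> = Transposition.transpose k (Suc k)"
  have tp: "\<tau> permutes {..<n}" unfolding \<tau>_def by (rule transpose_permutes[OF assms(1)])
  define se where "se = permute_list \<tau> e"
  have kn: "k < n" "Suc k < n" "k \<noteq> Suc k" using assms(1) by auto
  have g: "u \<noteq> 0" "u \<noteq> 1" "u \<noteq> of_real q ^ 2" "of_real q ^ 2 * u \<noteq> 1"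
    using good_simps[OF assms(3)[folded u_def] q0] by auto
  have "F (swapz k y) e = phi u * Rb q n N k (Suc k) u (F y) se"
  proof (cases "e \<in> Iset n N d")
    case False
    have seI: "se \<notin> Iset n N d" unfolding se_def using Iset_perm[OF tp] False by simp
    have "Rb q n N k (Suc k) u (F y) se = 0"
    proof (cases "se \<in> tidx n N")
      case True
      have len: "length e = n" using True perm_tidx[OF tp] unfolding se_def by (simp add: tidx_len)
      have sedef: "se = e[k := e!Suc k, Suc k := e!k]" unfolding se_def \<tau>_def
        using permute_swap[of k e] len assms(1) by simp
      have bk: "se[k := se!Suc k, Suc k := se!k] = e" unfolding sedef using len assms(1)
        by (simp add: list_update_swap list_update_id)
      show ?thesis using Rb_apply[OF True kn, of q u "F y"] bk seI False by (simp add: F_zero)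
    next
      case False
      then show ?thesis unfolding Rb_def by simp
    qed
    then show ?thesis using False by (simp add: F_zero)
  next
    case True
    have len: "length e = n" using True by (rule Iset_len)
    have sedef: "se = e[k := e!Suc k, Suc k := e!k]" unfolding se_def \<tau>_def
      using permute_swap[of k e] len assms(1) by simp
    have seI: "se \<in> Iset n N d" unfolding se_def using Iset_perm[OF tp] True by simp
    have seT: "se \<in> tidx n N" using seI by (rule Iset_tidx)
    have bk: "se[k := se!Suc k, Suc k := se!k] = e" unfolding sedef using len assms(1)
      by (simp add: list_update_swap list_update_id)
    have nth: "se!k = e!Suc k" "se!Suc k = e!k" unfolding sedef using len assms(1) by auto
    have R: "Rb q n N k (Suc k) u (F y) se = (if e!Suc k = e!k then f se y else
       Rbar_ent q u (e!Suc k) (e!k) (e!Suc k) (e!k) * f se y + Rbar_ent q u (e!Suc k) (e!k) (e!k) (e!Suc k) * f e y)"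
      using Rb_apply[OF seT kn, of q u "F y", unfolded bk, unfolded nth] seI True by (simp add: F_in)
    consider (eq) "e!k = e!Suc k" | (gt) "e!k > e!Suc k" | (lt) "e!k < e!Suc k" by linarith
    then show ?thesis
    proof cases
      case eq
      then have "se = e" unfolding sedef by (metis list_update_id)
      then show ?thesis using R eq exch_eq[OF assms True eq] True unfolding u_def by (simp add: F_in)
    next
      case gt
      have ne: "e!Suc k \<noteq> e!k" using gt by simp
      show ?thesis
        using R exch_gt[OF assms True gt] True ne gt unfolding u_def sedef[symmetric]
        by (simp add: F_in Rbar_diag[OF ne] Rbar_off'[OF ne])
    next
      case lt
      have ne: "e!Suc k \<noteq> e!k" using lt by simp
      show ?thesis
        using R exch_lt[OF assms True lt] True ne lt unfolding u_def sedef[symmetric]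
        by (simp add: F_in Rbar_diag[OF ne] Rbar_off'[OF ne])
    qed
  qed
  then show "F (swapz k y) e = sc (phi (y k / y (Suc k)))
     (Perm (Transposition.transpose k (Suc k)) (Rb q n N k (Suc k) (y k / y (Suc k)) (F y))) e"
    unfolding sc_def Perm_def se_def \<tau>_def u_def .
qed

end

definition ymv :: "(nat \<Rightarrow> complex) \<Rightarrow> nat \<Rightarrow> nat \<Rightarrow> complex" where
  "ymv z k = (\<lambda>i. if i < k then z (Suc i) else if i = k then z 0 else z i)"

definition pik :: "nat \<Rightarrow> nat \<Rightarrow> nat" where
  "pik k = (\<lambda>i. if i < k then Suc i else if i = k then 0 else i)"

lemma pik0: "pik 0 = id" unfolding pik_def by auto

lemma pik_Suc: "pik (Suc k) = pik k \<circ> Transposition.transpose k (Suc k)"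
  unfolding pik_def Transposition.transpose_def by (auto simp: fun_eq_iff)

lemma pik_perm: "k < n \<Longrightarrow> pik k permutes {..<n}"
proof (induction k)
  case 0
  then show ?case by (simp only: pik0 permutes_id)
next
  case (Suc k)
  then show ?case unfolding pik_Suc
    by (intro permutes_compose[OF transpose_permutes]) auto
qed

lemma pik_vals: "pik (Suc k) k = Suc k" "pik (Suc k) (Suc k) = 0" unfolding pik_def by auto

lemma ymv0: "ymv z 0 = z" unfolding ymv_def by auto
lemma ymv_swap: "swapz k (ymv z (Suc k)) = ymv z k"
  unfolding ymv_def swapz_def by (auto simp: fun_eq_iff)
lemma ymv_vals: "ymv z (Suc k) k = z (Suc k)" "ymv z (Suc k) (Suc k) = z 0"
  unfolding ymv_def by auto

lemma generic_good: "generic q p n z \<Longrightarrow> a < n \<Longrightarrow> b < n \<Longrightarrow> a \<noteq> b \<Longrightarrow> good q (z a / z b)"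
  unfolding generic_def by blast
lemma generic_goodp: "generic q p n z \<Longrightarrow> a < n \<Longrightarrow> b < n \<Longrightarrow> a \<noteq> b \<Longrightarrow> good q (of_real p * z a / z b)"
  unfolding generic_def by blast
lemma generic_torus: "generic q p n z \<Longrightarrow> torus n z"
  unfolding generic_def by blast

lemma torus_ymv: "k < n \<Longrightarrow> torus n z \<Longrightarrow> torus n (ymv z k)"
  unfolding torus_def ymv_def by auto

context setting begin

lemma good_inv: "good q u \<Longrightarrow> 1/u \<noteq> 0 \<and> 1/u \<noteq> of_real q ^ 2 \<and> of_real q ^ 2 * (1/u) \<noteq> 1"
  using good_simps[of q u] q0 by (auto simp: field_simps)

lemma Vlemma:
  assumes "generic q p n z" "k < n"
  shows "Perm (pik k) (F (ymv z k)) = sc (inverse (\<Prod>j\<in>{1..k}. phi (z j / z 0)))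
     (compose_ops (map (\<lambda>j. Rb q n N 0 j (z 0 / z j)) (rev [1..<Suc k])) (F z))"
  using assms(2)
proof (induction k)
  case 0
  then show ?case by (simp add: pik0 ymv0 Perm_def sc_1)
next
  case (Suc k)
  let ?y = "ymv z (Suc k)"
  define u where "u = z (Suc k) / z 0"
  define \<tau> where "\<tau> = Transposition.transpose k (Suc k)"
  have tp: "\<tau> permutes {..<n}" unfolding \<tau>_def by (rule transpose_permutes[OF Suc.prems])
  have pk: "pik k permutes {..<n}" "pik (Suc k) permutes {..<n}" using Suc.prems by (auto intro: pik_perm)
  have tor: "torus n ?y" using torus_ymv[OF Suc.prems generic_torus[OF assms(1)]] .
  have gu: "good q u" unfolding u_def using generic_good[OF assms(1), of "Suc k" 0] Suc.prems by simp
  have gy: "good q (?y k / ?y (Suc k))" using gu unfolding u_def ymv_vals .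
  have ex: "F (ymv z k) = sc (phi u) (Perm \<tau> (Rb q n N k (Suc k) u (F ?y)))"
    using exch_vec[OF Suc.prems tor gy] unfolding ymv_swap ymv_vals u_def \<tau>_def .
  define V where "V = Perm (pik (Suc k)) (F ?y)"
  have VT: "V \<in> tvecs n N" unfolding V_def by (intro Perm_tvecs pk Ffun_tvecs)
  have "Perm (pik k) (F (ymv z k)) = sc (phi u) (Perm (pik k) (Perm \<tau> (Rb q n N k (Suc k) u (F ?y))))"
    unfolding ex Perm_sc ..
  also have "\<dots> = sc (phi u) (Perm (pik (Suc k)) (Rb q n N k (Suc k) u (F ?y)))"
    using Perm_comp[OF pk(1) Rb_tvecs tp] unfolding pik_Suc \<tau>_def by simp
  also have "\<dots> = sc (phi u) (Rb q n N (Suc k) 0 u V)"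
    unfolding V_def using Perm_Rb[OF pk(2), of k "Suc k"] Suc.prems by (simp add: pik_vals)
  finally have Vk: "Perm (pik k) (F (ymv z k)) = sc (phi u) (Rb q n N (Suc k) 0 u V)" .
  have gi: "1/u \<noteq> 0" "1/u \<noteq> of_real q ^ 2" "of_real q ^ 2 * (1/u) \<noteq> 1" using good_inv[OF gu] by auto
  have "Rb q n N 0 (Suc k) (1/u) (Perm (pik k) (F (ymv z k))) = sc (phi u) V"
    unfolding Vk Rb_sc using Rb_unit[of 0 n "Suc k" "1/u" q V N] gi Suc.prems VT by simp
  then have "V = sc (inverse (phi u)) (Rb q n N 0 (Suc k) (1/u) (Perm (pik k) (F (ymv z k))))"
    using phi_nz[OF gu] by (simp add: sc_sc sc_1)
  also have "\<dots> = sc (inverse (phi u)) (Rb q n N 0 (Suc k) (1/u) (sc (inverse (\<Prod>j\<in>{1..k}. phi (z j / z 0)))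
     (compose_ops (map (\<lambda>j. Rb q n N 0 j (z 0 / z j)) (rev [1..<Suc k])) (F z))))"
    using Suc.IH Suc.prems by simp
  also have "\<dots> = sc (inverse (\<Prod>j\<in>{1..Suc k}. phi (z j / z 0)))
     (compose_ops (map (\<lambda>j. Rb q n N 0 j (z 0 / z j)) (rev [1..<Suc (Suc k)])) (F z))"
    unfolding Rb_sc sc_sc u_def by (simp add: mult.commute)
  finally show ?case unfolding V_def .
qed

end

lemma pik_last_list:
  assumes "length e = n" "1 \<le> n"
  shows "permute_list (pik (n - 1)) e = tl e @ [hd e]"
proof (rule nth_equalityI)
  show "length (permute_list (pik (n - 1)) e) = length (tl e @ [hd e])" using assms by (cases e) auto
next
  fix i assume "i < length (permute_list (pik (n - 1)) e)"
  then have i: "i < n" using assms by simp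
  show "permute_list (pik (n - 1)) e ! i = (tl e @ [hd e]) ! i"
  proof (cases "i < n - 1")
    case True
    then show ?thesis using i assms unfolding permute_list_def pik_def
      by (cases e) (auto simp: nth_append)
  next
    case False
    then have "i = n - 1" using i by simp
    then show ?thesis using i assms unfolding permute_list_def pik_def
      by (cases e) (auto simp: nth_append hd_conv_nth)
  qed
qed

context setting begin

definition Ab :: "nat \<Rightarrow> (nat \<Rightarrow> complex) \<Rightarrow> (nat list \<Rightarrow> complex) \<Rightarrow> (nat list \<Rightarrow> complex)" where
  "Ab m z = compose_ops (map (\<lambda>l. Rb q n N m l (of_real p * z m / z l)) (rev [0..<m])
      @ [Hop N (kappa c C) m] @ map (\<lambda>k. Rb q n N m k (z m / z k)) (rev [Suc m..<n]))"

definition Phi :: "nat \<Rightarrow> (nat \<Rightarrow> complex) \<Rightarrow> complex" where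
  "Phi m z = (\<Prod>l<m. phi (of_real p * z m / z l)) / (\<Prod>k\<in>{Suc m..<n}. phi (z k / z m))"

lemma c_nz: "l < N \<Longrightarrow> c l \<noteq> 0" using cprod by (simp add: prod_zero_iff)
lemma C_nz: "C \<noteq> 0" using CN cprod N2 by (metis power_0_left not_numeral_le_zero le_zero_eq)

lemma kapext_eq: "j \<le> N \<Longrightarrow> kapext N (kappa c C) j = kappa c C j"
  unfolding kapext_def kappa_def using CN C_nz by auto

lemma kap_ratio: "j < N \<Longrightarrow> C * (kapext N (kappa c C) (Suc j) / kapext N (kappa c C) j) = c j"
proof -
  assume j: "j < N"
  have nz: "(\<Prod>l<j. c l) \<noteq> 0" using c_nz j by (simp add: prod_zero_iff)
  show ?thesis using j nz C_nz unfolding kapext_eq[of j] kapext_eq[of "Suc j"]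
    by (simp add: kapext_eq kappa_def field_simps)
qed

lemma omega_point: "(\<lambda>k. if k = 0 then of_real p * ymv z (n - 1) (n - 1) else if k < n then ymv z (n - 1) (k - 1) else ymv z (n - 1) k)
   = z(0 := of_real p * z 0)"
proof
  fix k
  have n2: "2 \<le> n" using N2 Nn by simp
  show "(if k = 0 then of_real p * ymv z (n - 1) (n - 1) else if k < n then ymv z (n - 1) (k - 1) else ymv z (n - 1) k)
   = (z(0 := of_real p * z 0)) k"
    unfolding ymv_def using n2 by (cases "k = 0"; cases "k < n") auto
qed

lemma core0:
  assumes "generic q p n z"
  shows "F (z(0 := of_real p * z 0)) = sc (C * Phi 0 z) (Ab 0 z (F z))"
proof -
  have n1: "n - 1 < n" "1 \<le> n" using N2 Nn by auto
  define w where "w = ymv z (n - 1)"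
  define V where "V = Perm (pik (n - 1)) (F w)"
  define L where "L = map (\<lambda>j. Rb q n N 0 j (z 0 / z j)) (rev [1..<n])"
  define P where "P = (\<Prod>j\<in>{1..n-1}. phi (z j / z 0))"
  have Pnz: "P \<noteq> 0" unfolding P_def using generic_good[OF assms] phi_nz by (auto simp: prod_zero_iff)
  have V: "V = sc (inverse P) (compose_ops L (F z))"
    using Vlemma[OF assms n1(1)] n1 unfolding V_def w_def L_def P_def by simp
  have CL: "compose_ops L (F z) = sc P V" unfolding V using Pnz by (simp add: sc_sc sc_1)
  have Phi0: "Phi 0 z = inverse P"
  proof -
    have "{Suc 0..<n} = {1..n-1}" using n1 by auto
    then show ?thesis unfolding Phi_def P_def by (simp add: field_simps)
  qed
  have Ab0: "Ab 0 z X = Hop N (kappa c C) 0 (compose_ops L X)" for X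
    unfolding Ab_def L_def by simp
  have rhs: "sc (C * Phi 0 z) (Ab 0 z (F z)) = sc C (Hop N (kappa c C) 0 V)"
  proof -
    have e: "C * inverse P * P = C" using Pnz by simp
    show ?thesis unfolding Ab0 CL Phi0 Hop_sc sc_sc e ..
  qed
  have tw: "torus n w" unfolding w_def by (intro torus_ymv n1 generic_torus[OF assms])
  show ?thesis unfolding rhs
  proof
    fix e :: "nat list"
    define e2 where "e2 = permute_list (pik (n - 1)) e"
    have I2: "(e2 \<in> Iset n N d) = (e \<in> Iset n N d)" unfolding e2_def by (rule Iset_perm[OF pik_perm[OF n1(1)]])
    show "F (z(0 := of_real p * z 0)) e = sc C (Hop N (kappa c C) 0 V) e"
    proof (cases "e \<in> Iset n N d")
      case True
      have len: "length e = n" using True by (rule Iset_len)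
      have e2l: "e2 = tl e @ [hd e]" unfolding e2_def using pik_last_list[OF len n1(2)] .
      have ne: "e \<noteq> []" using len n1 by auto
      have le: "last e2 # butlast e2 = e" "last e2 = e ! 0" unfolding e2l using ne
        by (cases e; simp)+
      have e0: "e ! 0 < N" using tidx_nth[OF Iset_tidx[OF True], of 0] n1 by simp
      have cyc: "omega p n (f e) w = c (e!0) * f e2 w"
        using fam_cyc[of e2 w, unfolded le(1), unfolded le(2)] I2 True tw by simp
      have "F (z(0 := of_real p * z 0)) e = c (e!0) * f e2 w"
        using cyc True unfolding omega_def w_def omega_point by (simp add: F_in)
      also have "\<dots> = C * (kapext N (kappa c C) (Suc (e ! 0)) / kapext N (kappa c C) (e ! 0)) * f e2 w"
        using kap_ratio[OF e0] by simp
      also have "\<dots> = sc C (Hop N (kappa c C) 0 V) e"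
        unfolding sc_def Hop_def V_def Perm_def e2_def[symmetric] using I2 True by (simp add: F_in)
      finally show ?thesis .
    next
      case False
      then show ?thesis unfolding sc_def Hop_def V_def Perm_def e2_def[symmetric] using I2
        by (simp add: F_zero)
    qed
  qed
qed

end

lemma swapz_comp: "swapz m z = z \<circ> Transposition.transpose m (Suc m)"
  unfolding swapz_def Transposition.transpose_def by (auto simp: fun_eq_iff)

lemma generic_swapz:
  assumes "generic q p n z" "Suc m < n"
  shows "generic q p n (swapz m z)"
proof -
  have tp: "Transposition.transpose m (Suc m) permutes {..<n}" by (rule transpose_permutes[OF assms(2)])
  have im: "a < n \<Longrightarrow> Transposition.transpose m (Suc m) a < n" for a
    using permutes_in_image[OF tp] by auto
  have inj: "Transposition.transpose m (Suc m) a = Transposition.transpose m (Suc m) b \<longleftrightarrow> a = b" for a b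
    by (auto simp: Transposition.transpose_def split: if_splits)
  show ?thesis using assms(1) im inj unfolding generic_def torus_def swapz_comp by auto
qed

lemma list_all2_map_same: "(\<forall>x\<in>set xs. P (f x) (g x)) \<Longrightarrow> list_all2 P (map f xs) (map g xs)"
  by (induction xs) auto

lemma Perm_id: "Perm id X = X" unfolding Perm_def by simp

context setting begin

lemma core_step:
  assumes m: "Suc m < n"
    and IH: "\<And>z. generic q p n z \<Longrightarrow> F (z(m := of_real p * z m)) = sc (C * Phi m z) (Ab m z (F z))"
    and gz: "generic q p n z"
  shows "F (z(Suc m := of_real p * z (Suc m))) = sc (C * Phi (Suc m) z) (Ab (Suc m) z (F z))"
proof -
  define \<tau> where "\<tau> = Transposition.transpose m (Suc m)"
  have tp: "\<tau> permutes {..<n}" unfolding \<tau>_def by (rule transpose_permutes[OF m])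
  have tv: "\<tau> m = Suc m" "\<tau> (Suc m) = m" "\<And>k. k \<noteq> m \<Longrightarrow> k \<noteq> Suc m \<Longrightarrow> \<tau> k = k"
    unfolding \<tau>_def by auto
  define s where "s = swapz m z"
  have gs: "generic q p n s" unfolding s_def by (rule generic_swapz[OF gz m])
  define y where "y = s(m := of_real p * s m)"
  have sv: "s m = z (Suc m)" "s (Suc m) = z m" "\<And>k. k \<noteq> m \<Longrightarrow> k \<noteq> Suc m \<Longrightarrow> s k = z k"
    unfolding s_def swapz_def by auto
  have yswap: "swapz m y = z(Suc m := of_real p * z (Suc m))"
    unfolding y_def s_def swapz_def by (auto simp: fun_eq_iff)
  define u1 where "u1 = of_real p * z (Suc m) / z m"
  define u2 where "u2 = z m / z (Suc m)"
  have yr: "y m / y (Suc m) = u1" unfolding y_def u1_def using sv by simp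
  have tz: "torus n z" by (rule generic_torus[OF gz])
  have ty: "torus n y" using tz p0 m unfolding y_def torus_def sv(1) s_def swapz_def by auto
  have g1: "good q u1" unfolding u1_def by (rule generic_goodp[OF gz]) (use m in auto)
  have g2: "good q u2" unfolding u2_def by (rule generic_good[OF gz]) (use m in auto)
  have g3: "good q (z (Suc m) / z m)" by (rule generic_good[OF gz]) (use m in auto)
  have E1: "F (z(Suc m := of_real p * z (Suc m))) = sc (phi u1) (Perm \<tau> (Rb q n N m (Suc m) u1 (F y)))"
    using exch_vec[OF m ty] g1 unfolding yswap yr \<tau>_def by simp
  have E2: "F s = sc (phi u2) (Perm \<tau> (Rb q n N m (Suc m) u2 (F z)))"
    using exch_vec[OF m tz] g2 unfolding s_def[symmetric] u2_def[symmetric] \<tau>_def by simp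
  have E3: "F y = sc (C * Phi m s) (Ab m s (F s))" unfolding y_def by (rule IH[OF gs])
  define LA where "LA = map (\<lambda>l. Rb q n N m l (of_real p * z (Suc m) / z l)) (rev [0..<m])"
  define LB where "LB = map (\<lambda>k. Rb q n N m k (z (Suc m) / z k)) (rev [Suc (Suc m)..<n])"
  define LA' where "LA' = map (\<lambda>l. Rb q n N (Suc m) l (of_real p * z (Suc m) / z l)) (rev [0..<m])"
  define LB' where "LB' = map (\<lambda>k. Rb q n N (Suc m) k (z (Suc m) / z k)) (rev [Suc (Suc m)..<n])"
  have upt: "rev [Suc m..<n] = rev [Suc (Suc m)..<n] @ [Suc m]" using m by (simp add: upt_conv_Cons)
  have Abs: "Ab m s X = compose_ops (LA @ [Hop N (kappa c C) m] @ LB) (Rb q n N m (Suc m) (z (Suc m) / z m) X)" for X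
  proof -
    have "map (\<lambda>l. Rb q n N m l (of_real p * s m / s l)) (rev [0..<m]) = LA"
      unfolding LA_def using sv by (auto intro!: map_cong)
    moreover have "map (\<lambda>k. Rb q n N m k (s m / s k)) (rev [Suc (Suc m)..<n]) = LB"
      unfolding LB_def using sv by (auto intro!: map_cong)
    ultimately show ?thesis unfolding Ab_def upt using sv by (simp add: compose_ops_append)
  qed
  have Ab1: "Ab (Suc m) z X = Rb q n N (Suc m) m u1 (compose_ops (LA' @ [Hop N (kappa c C) (Suc m)] @ LB') X)" for X
    unfolding Ab_def LA'_def LB'_def u1_def by simp
  have okL: "\<forall>A\<in>set (LA' @ [Hop N (kappa c C) (Suc m)] @ LB'). okop n N A"
    unfolding LA'_def LB'_def by (auto simp: okop_Rb okop_Hop)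
  have rel: "list_all2 (\<lambda>A B. \<forall>X\<in>tvecs n N. Perm \<tau> (A X) = B (Perm \<tau> X))
      (LA' @ [Hop N (kappa c C) (Suc m)] @ LB') (LA @ [Hop N (kappa c C) m] @ LB)"
  proof (intro list_all2_appendI)
    show "list_all2 (\<lambda>A B. \<forall>X\<in>tvecs n N. Perm \<tau> (A X) = B (Perm \<tau> X)) LA' LA"
      unfolding LA'_def LA_def
      by (rule list_all2_map_same) (use m tv in \<open>auto simp: Perm_Rb[OF tp]\<close>)
    show "list_all2 (\<lambda>A B. \<forall>X\<in>tvecs n N. Perm \<tau> (A X) = B (Perm \<tau> X)) LB' LB"
      unfolding LB'_def LB_def
      by (rule list_all2_map_same) (use m tv in \<open>auto simp: Perm_Rb[OF tp]\<close>)
    show "list_all2 (\<lambda>A B. \<forall>X\<in>tvecs n N. Perm \<tau> (A X) = B (Perm \<tau> X)) [Hop N (kappa c C) (Suc m)] [Hop N (kappa c C) m]"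
      using m tv by (auto simp: Perm_Hop[OF tp])
  qed
  define L' where "L' = compose_ops (LA' @ [Hop N (kappa c C) (Suc m)] @ LB')"
  have FzT: "F z \<in> tvecs n N" by (rule Ffun_tvecs)
  have L'T: "L' (F z) \<in> tvecs n N" unfolding L'_def by (rule compose_ok(1)[OF okL FzT])
  have comm: "compose_ops (LA @ [Hop N (kappa c C) m] @ LB) (Perm \<tau> (F z)) = Perm \<tau> (L' (F z))"
    unfolding L'_def by (rule compose_Perm[OF rel okL FzT, symmetric])
  have unit: "Rb q n N (Suc m) m (z (Suc m) / z m) (Rb q n N m (Suc m) u2 (F z)) = F z"
  proof -
    have "Rb q n N (Suc m) m (z (Suc m) / z m) (Rb q n N m (Suc m) (1 / (z (Suc m) / z m)) (F z)) = F z"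
      using good_simps[OF g3 q0] m FzT by (intro Rb_unit) auto
    then show ?thesis unfolding u2_def by simp
  qed
  have step6: "Ab m s (F s) = sc (phi u2) (Perm \<tau> (L' (F z)))"
  proof -
    have "Ab m s (F s) = compose_ops (LA @ [Hop N (kappa c C) m] @ LB)
        (Rb q n N m (Suc m) (z (Suc m) / z m) (sc (phi u2) (Perm \<tau> (Rb q n N m (Suc m) u2 (F z)))))"
      unfolding Abs E2 ..
    also have "\<dots> = compose_ops (LA @ [Hop N (kappa c C) m] @ LB)
        (sc (phi u2) (Perm \<tau> (Rb q n N (Suc m) m (z (Suc m) / z m) (Rb q n N m (Suc m) u2 (F z)))))"
      using Perm_Rb[OF tp, of "Suc m" m q N "z (Suc m) / z m"] m tv by (simp add: Rb_sc)
    also have "\<dots> = compose_ops (LA @ [Hop N (kappa c C) m] @ LB) (sc (phi u2) (Perm \<tau> (F z)))"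
      unfolding unit ..
    also have "\<dots> = sc (phi u2) (compose_ops (LA @ [Hop N (kappa c C) m] @ LB) (Perm \<tau> (F z)))"
    proof -
      have okL2: "\<forall>A\<in>set (LA @ [Hop N (kappa c C) m] @ LB). okop n N A"
        unfolding LA_def LB_def by (auto simp: okop_Rb okop_Hop)
      show ?thesis by (rule compose_ok(2)[OF okL2 Perm_tvecs[OF tp FzT]])
    qed
    finally show ?thesis unfolding comm .
  qed
  have ttid: "\<tau> \<circ> \<tau> = id" unfolding \<tau>_def by (simp add: Transposition.transpose_comp_involutory)
  have "F (z(Suc m := of_real p * z (Suc m))) =
      sc (phi u1) (Perm \<tau> (Rb q n N m (Suc m) u1 (sc (C * Phi m s) (sc (phi u2) (Perm \<tau> (L' (F z)))))))"
    unfolding E1 E3 step6 ..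
  also have "\<dots> = sc (phi u1 * (C * Phi m s * phi u2)) (Perm \<tau> (Rb q n N m (Suc m) u1 (Perm \<tau> (L' (F z)))))"
    by (simp add: Rb_sc Perm_sc sc_sc)
  also have "\<dots> = sc (phi u1 * (C * Phi m s * phi u2)) (Perm \<tau> (Perm \<tau> (Rb q n N (Suc m) m u1 (L' (F z)))))"
    using Perm_Rb[OF tp, of "Suc m" m q N u1 "L' (F z)"] m tv by simp
  also have "\<dots> = sc (phi u1 * (C * Phi m s * phi u2)) (Rb q n N (Suc m) m u1 (L' (F z)))"
    using Perm_comp[OF tp Rb_tvecs tp] ttid by (simp add: Perm_id)
  also have "\<dots> = sc (phi u1 * (C * Phi m s * phi u2)) (Ab (Suc m) z (F z))"
    unfolding Ab1 L'_def ..
  also have "phi u1 * (C * Phi m s * phi u2) = C * Phi (Suc m) z"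
  proof -
    have p1: "(\<Prod>l<m. phi (of_real p * s m / s l)) = (\<Prod>l<m. phi (of_real p * z (Suc m) / z l))"
      using sv by (intro prod.cong) auto
    have p2: "(\<Prod>k\<in>{Suc m..<n}. phi (s k / s m)) = phi u2 * (\<Prod>k\<in>{Suc (Suc m)..<n}. phi (z k / z (Suc m)))"
    proof -
      have "(\<Prod>k\<in>{Suc m..<n}. phi (s k / s m)) = phi (s (Suc m) / s m) * (\<Prod>k\<in>{Suc (Suc m)..<n}. phi (s k / s m))"
        using m by (simp add: prod.atLeast_Suc_lessThan)
      also have "(\<Prod>k\<in>{Suc (Suc m)..<n}. phi (s k / s m)) = (\<Prod>k\<in>{Suc (Suc m)..<n}. phi (z k / z (Suc m)))"
        using sv by (intro prod.cong) auto
      finally show ?thesis unfolding u2_def using sv by simp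
    qed
    have p3: "(\<Prod>l<Suc m. phi (of_real p * z (Suc m) / z l)) = phi u1 * (\<Prod>l<m. phi (of_real p * z (Suc m) / z l))"
      unfolding u1_def by simp
    show ?thesis unfolding Phi_def p1 p2 p3 using phi_nz[OF g2] by (simp add: field_simps)
  qed
  finally show ?thesis .
qed

end

context setting begin

lemma core: "m < n \<Longrightarrow> generic q p n z \<Longrightarrow> F (z(m := of_real p * z m)) = sc (C * Phi m z) (Ab m z (F z))"
proof (induction m arbitrary: z)
  case 0
  from 0(2) show ?case by (rule core0)
next
  case (Suc m)
  show ?case by (rule core_step[OF Suc.prems(1) Suc.IH[OF Suc_lessD[OF Suc.prems(1)]] Suc.prems(2)])
qed

lemma Rop_Rb: "Rop q n N m l w X = sc (rfun q N w) (Rb q n N m l w X)"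
  unfolding Rop_def Rb_def sc_def by (auto simp: sum_distrib_left algebra_simps)

lemma rfun_nz': "good q w \<Longrightarrow> rfun q N w \<noteq> 0"
  using rfun_nz[of q w N] q0 q1 N2 by simp

lemma Rinv_eq:
  assumes "k < n" "m < n" "k \<noteq> m" "good q w" "X \<in> tvecs n N"
  shows "Rinv q n N k m w X = sc (inverse (rfun q N w)) (Rb q n N m k (1/w) X)"
proof -
  have r: "rfun q N w \<noteq> 0" by (rule rfun_nz'[OF assms(4)])
  have g: "w \<noteq> 0" "w \<noteq> of_real q ^ 2" "of_real q ^ 2 * w \<noteq> 1" using good_simps[OF assms(4) q0] by auto
  have gi: "1/w \<noteq> 0" "1/w \<noteq> of_real q ^ 2" "of_real q ^ 2 * (1/w) \<noteq> 1" using good_inv[OF assms(4)] by auto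
  have inj: "inj_on (Rop q n N k m w) (tvecs n N)"
  proof (rule inj_onI)
    fix Y1 Y2 assume Y: "Y1 \<in> tvecs n N" "Y2 \<in> tvecs n N" "Rop q n N k m w Y1 = Rop q n N k m w Y2"
    have "sc (inverse (rfun q N w)) (Rop q n N k m w Y1) = sc (inverse (rfun q N w)) (Rop q n N k m w Y2)"
      using Y(3) by simp
    then have "Rb q n N k m w Y1 = Rb q n N k m w Y2" unfolding Rop_Rb sc_sc using r by (simp add: sc_1)
    then have "Rb q n N m k (1/w) (Rb q n N k m (1/(1/w)) Y1) = Rb q n N m k (1/w) (Rb q n N k m (1/(1/w)) Y2)"
      by simp
    then show "Y1 = Y2" using Rb_unit[OF assms(2,1) assms(3)[symmetric] gi] Y(1,2) by simp
  qed
  have mem: "sc (inverse (rfun q N w)) (Rb q n N m k (1/w) X) \<in> tvecs n N" by (intro sc_tvecs Rb_tvecs)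
  have img: "Rop q n N k m w (sc (inverse (rfun q N w)) (Rb q n N m k (1/w) X)) = X"
    unfolding Rop_Rb Rb_sc sc_sc using r Rb_unit[OF assms(1,2,3) g assms(5)] by (simp add: sc_1)
  show ?thesis unfolding Rinv_def by (rule the_inv_into_f_eq[OF inj img mem])
qed

definition rho :: "nat \<Rightarrow> (nat \<Rightarrow> complex) \<Rightarrow> complex" where
  "rho m z = (\<Prod>l<m. rfun q N (of_real p * z m / z l)) * (\<Prod>k\<in>{Suc m..<n}. inverse (rfun q N (z k / z m)))"

lemma prod_list_rev_upt: "prod_list (map g (rev [a..<b])) = (\<Prod>i\<in>{a..<b}. g i)"
  by (subst prod.distinct_set_conv_list[symmetric]) auto

lemma qKZ_op_eq:
  assumes "m < n" "generic q p n z" "X \<in> tvecs n N"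
  shows "qKZ_op q p n N (kappa c C) m z X = sc (rho m z) (Ab m z X)"
proof -
  define GA where "GA = map (\<lambda>l. Rb q n N m l (of_real p * z m / z l)) (rev [0..<m])"
  define GB where "GB = map (\<lambda>k. Rb q n N m k (z m / z k)) (rev [Suc m..<n])"
  define H where "H = Hop N (kappa c C) m"
  have okA: "\<forall>A\<in>set GA. okop n N A" unfolding GA_def by (auto simp: okop_Rb)
  have okB: "\<forall>A\<in>set GB. okop n N A" unfolding GB_def by (auto simp: okop_Rb)
  have A: "compose_ops (map (\<lambda>l. Rop q n N m l (of_real p * z m / z l)) (rev [0..<m])) Y
     = sc (\<Prod>l<m. rfun q N (of_real p * z m / z l)) (compose_ops GA Y)" if "Y \<in> tvecs n N" for Y
  proof -
    have "compose_ops (map (\<lambda>l. Rop q n N m l (of_real p * z m / z l)) (rev [0..<m])) Y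
      = sc (prod_list (map (\<lambda>l. rfun q N (of_real p * z m / z l)) (rev [0..<m]))) (compose_ops GA Y)"
      unfolding GA_def by (rule compose_scal[where n=n and N=N]) (auto simp: Rop_Rb okop_Rb that)
    then show ?thesis by (simp add: prod_list_rev_upt atLeast0LessThan)
  qed
  have B: "compose_ops (map (\<lambda>k. Rinv q n N k m (z k / z m)) (rev [Suc m..<n])) Y
     = sc (\<Prod>k\<in>{Suc m..<n}. inverse (rfun q N (z k / z m))) (compose_ops GB Y)" if "Y \<in> tvecs n N" for Y
  proof -
    have "compose_ops (map (\<lambda>k. Rinv q n N k m (z k / z m)) (rev [Suc m..<n])) Y
      = sc (prod_list (map (\<lambda>k. inverse (rfun q N (z k / z m))) (rev [Suc m..<n]))) (compose_ops GB Y)"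
      unfolding GB_def
    proof (rule compose_scal[where n=n and N=N])
      show "\<forall>i\<in>set (rev [Suc m..<n]). \<forall>X\<in>tvecs n N. Rinv q n N i m (z i / z m) X =
          sc (inverse (rfun q N (z i / z m))) (Rb q n N m i (z m / z i) X)"
        using Rinv_eq[where m=m] generic_good[OF assms(2)] assms(1) by auto
    qed (auto simp: okop_Rb that)
    then show ?thesis by (simp add: prod_list_rev_upt)
  qed
  have "qKZ_op q p n N (kappa c C) m z X =
     compose_ops (map (\<lambda>l. Rop q n N m l (of_real p * z m / z l)) (rev [0..<m]))
       (H (compose_ops (map (\<lambda>k. Rinv q n N k m (z k / z m)) (rev [Suc m..<n])) X))"
    unfolding qKZ_op_def H_def by (simp add: compose_ops_append)
  also have "\<dots> = compose_ops (map (\<lambda>l. Rop q n N m l (of_real p * z m / z l)) (rev [0..<m]))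
       (sc (\<Prod>k\<in>{Suc m..<n}. inverse (rfun q N (z k / z m))) (H (compose_ops GB X)))"
    unfolding B[OF assms(3)] H_def Hop_sc ..
  also have "\<dots> = sc (\<Prod>l<m. rfun q N (of_real p * z m / z l)) (compose_ops GA
       (sc (\<Prod>k\<in>{Suc m..<n}. inverse (rfun q N (z k / z m))) (H (compose_ops GB X))))"
    by (rule A) (unfold H_def, intro sc_tvecs Hop_tvecs compose_ok(1)[OF okB assms(3)])
  also have "\<dots> = sc (rho m z) (compose_ops GA (H (compose_ops GB X)))"
    unfolding rho_def
    using compose_ok(2)[OF okA, of "H (compose_ops GB X)"] Hop_tvecs compose_ok(1)[OF okB assms(3)]
    unfolding H_def by (simp add: sc_sc)
  also have "\<dots> = sc (rho m z) (Ab m z X)"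
    unfolding Ab_def GA_def GB_def H_def by (simp add: compose_ops_append)
  finally show ?thesis .
qed

end

lemma prod_if_delta_rest:
  fixes X :: complex and g :: "nat \<Rightarrow> complex"
  assumes "m < n"
  shows "(\<Prod>b<n. if b = m then X else if m < b then g b else 1) = X * (\<Prod>k\<in>{Suc m..<n}. g k)"
proof -
  have "(\<Prod>b<n. if b = m then X else if m < b then g b else 1) =
        (\<Prod>b<n. (if b = m then X else 1) * (if m < b then g b else 1))"
    by (intro prod.cong) auto
  also have "\<dots> = (\<Prod>b<n. if b = m then X else 1) * (\<Prod>b<n. if m < b then g b else 1)"
    by (rule prod.distrib)
  also have "(\<Prod>b<n. if b = m then X else 1) = X" using assms by (simp add: prod.delta)
  also have "(\<Prod>b<n. if m < b then g b else 1) = (\<Prod>k\<in>{..<n} \<inter> {b. m < b}. g k)"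
    using prod.inter_restrict[of "{..<n}" g "{b. m < b}"] by simp
  also have "{..<n} \<inter> {b. m < b} = {Suc m..<n}" by auto
  finally show ?thesis .
qed

lemma Kpow_shift:
  fixes z :: "nat \<Rightarrow> complex"
  assumes "m < n" "0 < p"
  shows "(\<Prod>a<n. (z(m := of_real p * z m)) a powr (\<alpha> + \<beta> * of_nat (Suc a)))
     = (\<Prod>a<n. z a powr (\<alpha> + \<beta> * of_nat (Suc a))) * of_real p powr (\<alpha> + \<beta> * of_nat (Suc m))"
proof -
  have "(\<Prod>a<n. (z(m := of_real p * z m)) a powr (\<alpha> + \<beta> * of_nat (Suc a))) =
      (\<Prod>a<n. (if a = m then of_real p powr (\<alpha> + \<beta> * of_nat (Suc a)) else 1) * z a powr (\<alpha> + \<beta> * of_nat (Suc a)))"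
  proof (intro prod.cong refl)
    fix a
    show "(z(m := of_real p * z m)) a powr (\<alpha> + \<beta> * of_nat (Suc a)) =
      (if a = m then of_real p powr (\<alpha> + \<beta> * of_nat (Suc a)) else 1) * z a powr (\<alpha> + \<beta> * of_nat (Suc a))"
      using assms(2) by (cases "a = m") (auto simp: powr_times_real_left)
  qed
  also have "\<dots> = (\<Prod>a<n. if a = m then of_real p powr (\<alpha> + \<beta> * of_nat (Suc a)) else 1) *
       (\<Prod>a<n. z a powr (\<alpha> + \<beta> * of_nat (Suc a)))" by (rule prod.distrib)
  also have "(\<Prod>a<n. if a = m then of_real p powr (\<alpha> + \<beta> * of_nat (Suc a)) else (1::complex)) =
      of_real p powr (\<alpha> + \<beta> * of_nat (Suc m))" using assms(1) by (simp add: prod.delta)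
  finally show ?thesis by (simp add: mult.commute)
qed

lemma Kh_shift:
  fixes z :: "nat \<Rightarrow> complex" and h :: "complex \<Rightarrow> complex"
  assumes "m < n" "\<And>a b. a < n \<Longrightarrow> b < n \<Longrightarrow> a \<noteq> b \<Longrightarrow> h (z b / z a) \<noteq> 0"
  shows "(\<Prod>b<n. \<Prod>a<b. h ((z(m := P * z m)) b / (z(m := P * z m)) a))
     = (\<Prod>b<n. \<Prod>a<b. h (z b / z a)) *
       ((\<Prod>l<m. h (P * z m / z l) / h (z m / z l)) * (\<Prod>k\<in>{Suc m..<n}. h (z k / (P * z m)) / h (z k / z m)))"
proof -
  define R where "R b a = (if b = m then h (P * z m / z a) / h (z m / z a)
     else if a = m then h (z b / (P * z m)) / h (z b / z m) else 1)" for b a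
  have pw: "h ((z(m := P * z m)) b / (z(m := P * z m)) a) = h (z b / z a) * R b a" if "a < b" "b < n" for a b
  proof -
    have ne: "h (z b / z a) \<noteq> 0" using assms(2)[of a b] that by auto
    show ?thesis unfolding R_def using ne that by (cases "b = m"; cases "a = m") auto
  qed
  have "(\<Prod>b<n. \<Prod>a<b. h ((z(m := P * z m)) b / (z(m := P * z m)) a)) = (\<Prod>b<n. \<Prod>a<b. h (z b / z a) * R b a)"
    using pw by (intro prod.cong refl) auto
  also have "\<dots> = (\<Prod>b<n. \<Prod>a<b. h (z b / z a)) * (\<Prod>b<n. \<Prod>a<b. R b a)"
    by (simp add: prod.distrib)
  also have "(\<Prod>b<n. \<Prod>a<b. R b a) = (\<Prod>b<n. if b = m then (\<Prod>l<m. h (P * z m / z l) / h (z m / z l))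
      else if m < b then h (z b / (P * z m)) / h (z b / z m) else 1)"
  proof (intro prod.cong refl)
    fix b
    show "(\<Prod>a<b. R b a) = (if b = m then (\<Prod>l<m. h (P * z m / z l) / h (z m / z l))
      else if m < b then h (z b / (P * z m)) / h (z b / z m) else 1)"
    proof (cases "b = m")
      case True
      then show ?thesis unfolding R_def by simp
    next
      case False
      then have "(\<Prod>a<b. R b a) = (\<Prod>a<b. if a = m then h (z b / (P * z m)) / h (z b / z m) else 1)"
        unfolding R_def by simp
      also have "\<dots> = (if m < b then h (z b / (P * z m)) / h (z b / z m) else 1)"
        by (simp add: prod.delta)
      finally show ?thesis using False by simp
    qed
  qed
  also have "\<dots> = (\<Prod>l<m. h (P * z m / z l) / h (z m / z l)) * (\<Prod>k\<in>{Suc m..<n}. h (z k / (P * z m)) / h (z k / z m))"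
    by (rule prod_if_delta_rest[OF assms(1)])
  finally show ?thesis .
qed


context setting begin

lemma hdn_nz: "good q x \<Longrightarrow> h_num q N x \<noteq> 0 \<and> h_den pos' q N x \<noteq> 0"
  using h_num_nz[of q x N] h_den_nz[of q x N pos'] q0 q1 N2 by auto

lemma qpow_facts:
  "q powr (-(1/real N - 1)) * q powr (1/real N - 1) = 1"
  "q powr (-(1 + 1/real N)) * q powr (1/real N - 1) = inverse (q^2)"
  "q powr (1 + 1/real N) * inverse (q powr (1/real N - 1)) = q^2"
  "q powr (1/real N - 1) \<noteq> 0"
proof -
  show "q powr (-(1/real N - 1)) * q powr (1/real N - 1) = 1"
    using q0 by (simp add: powr_add[symmetric])
  have "q powr (-(1 + 1/real N)) * q powr (1/real N - 1) = q powr (- 2)"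
    using q0 by (simp add: powr_add[symmetric])
  also have "\<dots> = inverse (q^2)" using q0 by (simp add: powr_minus powr_realpow[of q 2, simplified])
  finally show "q powr (-(1 + 1/real N)) * q powr (1/real N - 1) = inverse (q^2)" .
  have "q powr (1 + 1/real N) * inverse (q powr (1/real N - 1)) = q powr 2"
    using q0 by (simp add: powr_minus[symmetric] powr_add[symmetric])
  also have "\<dots> = q^2" using q0 by (simp add: powr_realpow[of q 2, simplified])
  finally show "q powr (1 + 1/real N) * inverse (q powr (1/real N - 1)) = q^2" .
  show "q powr (1/real N - 1) \<noteq> 0" using q0 by simp
qed

definition A0 :: complex where
  "A0 = (if pos then of_real (q powr (-(1/real N - 1))) else - of_real (q powr (-(1 + 1/real N))))"
definition B0 :: complex where
  "B0 = (if pos then of_real (q powr (1/real N - 1)) else - of_real (q powr (1 + 1/real N)))"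

lemma fac1:
  assumes "good q x"
  shows "h_den pos q N x / h_num q N x * phi x = A0 * rfun q N x"
proof -
  have nz: "h_num q N x \<noteq> 0" "h_den True q N x \<noteq> 0" using hdn_nz[OF assms] by auto
  have g: "x \<noteq> of_real q ^ 2" "of_real q ^ 2 * x \<noteq> 1" using good_simps[OF assms q0] by auto
  show ?thesis
  proof (cases pos)
    case True
    have "A0 * rfun q N x = of_real (q powr (-(1/real N - 1)) * q powr (1/real N - 1)) * h_den True q N x / h_num q N x"
      unfolding A0_def rfun_eq using True by simp
    then show ?thesis using True unfolding phi_def qpow_facts(1) by simp
  next
    case False
    have rel: "h_den False q N x * (1 - of_real q ^ 2 * x) = h_den True q N x * (1 - inverse (of_real q ^ 2) * x)"
      by (rule h_den_rel[OF assms q0 q1 N2])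
    have x2: "x - of_real q ^ 2 \<noteq> 0" using g by simp
    have "h_den pos q N x / h_num q N x * phi x = h_den False q N x * (1 - of_real q ^ 2 * x) / (h_num q N x * (x - of_real q ^ 2))"
      unfolding phi_def using False by simp
    also have "\<dots> = h_den True q N x * (1 - inverse (of_real q ^ 2) * x) / (h_num q N x * (x - of_real q ^ 2))"
      unfolding rel ..
    also have "\<dots> = - inverse (of_real q ^ 2) * h_den True q N x / h_num q N x"
    proof -
      have e1: "1 - inverse (of_real q ^ 2) * x = (- inverse (of_real q ^2)) * (x - of_real q^2)"
        using qc0 by (simp add: field_simps)
      have gen: "\<And>a b c d::complex. d \<noteq> 0 \<Longrightarrow> (a * (c * d)) / (b * d) = c * a / b"
        by (simp add: field_simps)
      show ?thesis unfolding e1 using gen[OF x2] .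
    qed
    also have "\<dots> = A0 * rfun q N x"
    proof -
      have "A0 * rfun q N x = - of_real (q powr (-(1 + 1/real N)) * q powr (1/real N - 1)) * h_den True q N x / h_num q N x"
        unfolding A0_def rfun_eq using False by simp
      then show ?thesis unfolding qpow_facts(2) by simp
    qed
    finally show ?thesis .
  qed
qed

lemma fac2:
  assumes "good q x"
  shows "h_num q N x / h_den pos q N x / phi x = B0 * inverse (rfun q N x)"
proof -
  have nz: "h_num q N x \<noteq> 0" "h_den True q N x \<noteq> 0" "h_den False q N x \<noteq> 0" using hdn_nz[OF assms] by auto
  have g: "x \<noteq> of_real q ^ 2" "of_real q ^ 2 * x \<noteq> 1" using good_simps[OF assms q0] by auto
  have E: "of_real (q powr (1/real N - 1)) \<noteq> (0::complex)" using qpow_facts(4) by simp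
  show ?thesis
  proof (cases pos)
    case True
    show ?thesis using True nz E unfolding phi_def B0_def rfun_eq by (simp add: field_simps)
  next
    case False
    have rel: "h_den False q N x * (1 - of_real q ^ 2 * x) = h_den True q N x * (1 - inverse (of_real q ^ 2) * x)"
      by (rule h_den_rel[OF assms q0 q1 N2])
    have x2: "x - of_real q ^ 2 \<noteq> 0" "1 - of_real q ^ 2 * x \<noteq> 0" using g by auto
    have x3: "1 - inverse (of_real q ^ 2) * x \<noteq> 0" using x2 qc0 by (auto simp: field_simps)
    have "h_num q N x / h_den pos q N x / phi x = h_num q N x * (x - of_real q ^ 2) / (h_den False q N x * (1 - of_real q ^ 2 * x))"
      unfolding phi_def using False by simp
    also have "\<dots> = h_num q N x * (x - of_real q ^ 2) / (h_den True q N x * (1 - inverse (of_real q ^ 2) * x))"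
      unfolding rel ..
    also have "\<dots> = - (of_real q ^ 2) * h_num q N x / h_den True q N x"
      using x2 x3 nz qc0 by (simp add: field_simps)
    also have "\<dots> = B0 * inverse (rfun q N x)"
    proof -
      have "B0 * inverse (rfun q N x) = - of_real (q powr (1 + 1/real N) * inverse (q powr (1/real N - 1))) * h_num q N x / h_den True q N x"
        unfolding B0_def rfun_eq using False E nz by (simp add: field_simps)
      then show ?thesis unfolding qpow_facts(3) by simp
    qed
    finally show ?thesis .
  qed
qed

end

context setting begin

lemma h_facts:
  assumes hyp: "\<forall>z. good q z \<longrightarrow> h (z / of_real p) / h z = h_num q N z / h_den pos q N z"
    and g: "good q x"
  shows "h x \<noteq> 0" "h (x / of_real p) \<noteq> 0"
    "h (x / of_real p) / h x = h_num q N x / h_den pos q N x"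
    "h x / h (x / of_real p) = h_den pos q N x / h_num q N x"
proof -
  have e: "h (x / of_real p) / h x = h_num q N x / h_den pos q N x" using hyp g by blast
  have nz: "h_num q N x / h_den pos q N x \<noteq> 0" using hdn_nz[OF g] by simp
  show a: "h x \<noteq> 0" using e nz by auto
  show b: "h (x / of_real p) \<noteq> 0" using e nz by auto
  show "h (x / of_real p) / h x = h_num q N x / h_den pos q N x" by (rule e)
  show "h x / h (x / of_real p) = h_den pos q N x / h_num q N x"
  proof -
    have "h x / h (x / of_real p) = inverse (h (x / of_real p) / h x)" by simp
    then show ?thesis unfolding e by simp
  qed
qed

lemma K_shift:
  assumes hyp: "\<forall>z. good q z \<longrightarrow> h (z / of_real p) / h z = h_num q N z / h_den pos q N z"
    and gz: "generic q p n z" and m: "m < n"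
  shows "Kfun \<alpha> \<beta> h n (z(m := of_real p * z m)) = Kfun \<alpha> \<beta> h n z * of_real p powr (\<alpha> + \<beta> * of_nat (Suc m))
     * (\<Prod>l<m. h_den pos q N (of_real p * z m / z l) / h_num q N (of_real p * z m / z l))
     * (\<Prod>k\<in>{Suc m..<n}. h_num q N (z k / z m) / h_den pos q N (z k / z m))"
proof -
  have pnz: "(of_real p :: complex) \<noteq> 0" using p0 by simp
  have hz: "h (z b / z a) \<noteq> 0" if "a < n" "b < n" "a \<noteq> b" for a b
    using h_facts(1)[OF hyp generic_good[OF gz that(2,1)]] that by auto
  have r1: "(\<Prod>l<m. h (of_real p * z m / z l) / h (z m / z l)) =
      (\<Prod>l<m. h_den pos q N (of_real p * z m / z l) / h_num q N (of_real p * z m / z l))"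
  proof (intro prod.cong refl)
    fix l assume "l \<in> {..<m}"
    then have gl: "good q (of_real p * z m / z l)" using generic_goodp[OF gz, of m l] m by auto
    have "of_real p * z m / z l / of_real p = z m / z l" using pnz by simp
    then show "h (of_real p * z m / z l) / h (z m / z l) =
      h_den pos q N (of_real p * z m / z l) / h_num q N (of_real p * z m / z l)"
      using h_facts(4)[OF hyp gl] by simp
  qed
  have r2: "(\<Prod>k\<in>{Suc m..<n}. h (z k / (of_real p * z m)) / h (z k / z m)) =
      (\<Prod>k\<in>{Suc m..<n}. h_num q N (z k / z m) / h_den pos q N (z k / z m))"
  proof (intro prod.cong refl)
    fix k assume "k \<in> {Suc m..<n}"
    then have gk: "good q (z k / z m)" using generic_good[OF gz, of k m] m by auto
    have e: "z k / z m / of_real p = z k / (of_real p * z m)" by (simp add: mult.commute)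
    show "h (z k / (of_real p * z m)) / h (z k / z m) = h_num q N (z k / z m) / h_den pos q N (z k / z m)"
      using h_facts(3)[OF hyp gk] unfolding e .
  qed
  have A: "(\<Prod>a<n. (z(m := of_real p * z m)) a powr (\<alpha> + \<beta> * of_nat (Suc a)))
     = (\<Prod>a<n. z a powr (\<alpha> + \<beta> * of_nat (Suc a))) * of_real p powr (\<alpha> + \<beta> * of_nat (Suc m))"
    by (rule Kpow_shift[OF m p0])
  have B: "(\<Prod>b<n. \<Prod>a<b. h ((z(m := of_real p * z m)) b / (z(m := of_real p * z m)) a))
     = (\<Prod>b<n. \<Prod>a<b. h (z b / z a)) *
       ((\<Prod>l<m. h (of_real p * z m / z l) / h (z m / z l)) * (\<Prod>k\<in>{Suc m..<n}. h (z k / (of_real p * z m)) / h (z k / z m)))"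
    by (rule Kh_shift[where h=h and z=z, OF m hz])
  show ?thesis unfolding Kfun_def A B r1 r2 by (simp add: algebra_simps)
qed

end

lemma real_pow_comb:
  fixes q :: real assumes "0 < q"
  shows "q powr a * (q powr b) ^ k * (q powr c) ^ j * (q powr d) ^ l = q powr (a + real k * b + real j * c + real l * d)"
  using assms by (simp add: powr_power powr_add)

context setting begin

lemma const_id:
  assumes powhyp: "if pos then
           of_real p powr \<alpha> = inverse C * of_real (q powr (- (real n + 1) * (1 / real N - 1)))
         \<and> of_real p powr \<beta> = of_real (q powr (2 * (1 / real N - 1)))
         else
           of_real p powr \<alpha> = (-1) ^ (n - 1) * inverse C * of_real (q powr (- (real n + 1) * (1 + 1 / real N)))
         \<and> of_real p powr \<beta> = of_real (q powr (2 * (1 + 1 / real N)))"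
    and m: "m < n"
  shows "of_real p powr (\<alpha> + \<beta> * of_nat (Suc m)) * C * A0 ^ m * B0 ^ (n - Suc m) = 1"
proof -
  have pnz: "(of_real p :: complex) \<noteq> 0" using p0 by simp
  have pp: "of_real p powr (\<alpha> + \<beta> * of_nat (Suc m)) = of_real p powr \<alpha> * (of_real p powr \<beta>) ^ (Suc m)"
  proof -
    have "of_real p powr (\<alpha> + \<beta> * of_nat (Suc m)) = of_real p powr \<alpha> * of_real p powr (of_nat (Suc m) * \<beta>)"
      by (simp add: powr_add mult.commute)
    also have "of_real p powr (of_nat (Suc m) * \<beta>) = (of_real p powr \<beta>) ^ (Suc m)"
      using powr_power[OF pnz, of \<beta> "Suc m"] by simp
    finally show ?thesis .
  qed
  have nm: "real (n - Suc m) = real n - real m - 1" using m by (simp add: of_nat_diff)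
  have Cc: "inverse C * C = 1" using C_nz by simp
  show ?thesis
  proof (cases pos)
    case True
    define e where "e = 1 / real N - 1"
    have pa: "of_real p powr \<alpha> = inverse C * of_real (q powr (- (real n + 1) * e))"
      and pb: "of_real p powr \<beta> = of_real (q powr (2 * e))" using powhyp True unfolding e_def by auto
    have R: "q powr (- (real n + 1) * e) * (q powr (2 * e)) ^ (Suc m) * (q powr (-e)) ^ m * (q powr e) ^ (n - Suc m) = 1"
      unfolding real_pow_comb[OF q0] nm using q0 by (simp add: algebra_simps)
    have "of_real p powr (\<alpha> + \<beta> * of_nat (Suc m)) * C * A0 ^ m * B0 ^ (n - Suc m)
       = (inverse C * C) * of_real (q powr (- (real n + 1) * e) * (q powr (2 * e)) ^ (Suc m) * (q powr (-e)) ^ m * (q powr e) ^ (n - Suc m))"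
      unfolding pp pa pb A0_def B0_def e_def using True q0 by (simp add: algebra_simps)
    then show ?thesis unfolding R Cc by simp
  next
    case False
    define g where "g = 1 + 1 / real N"
    have pa: "of_real p powr \<alpha> = (-1) ^ (n - 1) * inverse C * of_real (q powr (- (real n + 1) * g))"
      and pb: "of_real p powr \<beta> = of_real (q powr (2 * g))" using powhyp False unfolding g_def by auto
    have R: "q powr (- (real n + 1) * g) * (q powr (2 * g)) ^ (Suc m) * (q powr (-g)) ^ m * (q powr g) ^ (n - Suc m) = 1"
      unfolding real_pow_comb[OF q0] nm using q0 by (simp add: algebra_simps)
    have sgn: "((-1::complex) ^ (n - 1)) * (-1) ^ m * (-1) ^ (n - Suc m) = 1"
    proof -
      have e: "(n - 1) + m + (n - Suc m) = 2 * (n - 1)" using m by simp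
      have "((-1::complex) ^ (n - 1)) * (-1) ^ m * (-1) ^ (n - Suc m) = (-1) ^ ((n - 1) + m + (n - Suc m))"
        by (simp only: power_add)
      then have "((-1::complex) ^ (n - 1)) * (-1) ^ m * (-1) ^ (n - Suc m) = (-1) ^ (2 * (n - 1))"
        unfolding e .
      then show ?thesis by simp
    qed
    have "of_real p powr (\<alpha> + \<beta> * of_nat (Suc m)) * C * A0 ^ m * B0 ^ (n - Suc m)
       = (inverse C * C) * (((-1::complex) ^ (n - 1)) * (-1) ^ m * (-1) ^ (n - Suc m)) *
         of_real (q powr (- (real n + 1) * g) * (q powr (2 * g)) ^ (Suc m) * (q powr (-g)) ^ m * (q powr g) ^ (n - Suc m))"
      unfolding pp pa pb A0_def B0_def g_def using False q0 by (simp add: algebra_simps power_minus[of "of_real _"])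
    then show ?thesis unfolding R Cc sgn by simp
  qed
qed

end

context setting begin

lemma Ab_sc: "X \<in> tvecs n N \<Longrightarrow> Ab m z (sc a X) = sc a (Ab m z X)"
  unfolding Ab_def by (rule compose_ok(2)) (auto simp: okop_Rb okop_Hop)

lemma scalar_main:
  assumes hyp: "\<forall>z. good q z \<longrightarrow> h (z / of_real p) / h z = h_num q N z / h_den pos q N z"
    and powhyp: "if pos then
           of_real p powr \<alpha> = inverse C * of_real (q powr (- (real n + 1) * (1 / real N - 1)))
         \<and> of_real p powr \<beta> = of_real (q powr (2 * (1 / real N - 1)))
         else
           of_real p powr \<alpha> = (-1) ^ (n - 1) * inverse C * of_real (q powr (- (real n + 1) * (1 + 1 / real N)))
         \<and> of_real p powr \<beta> = of_real (q powr (2 * (1 + 1 / real N)))"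
    and gz: "generic q p n z" and m: "m < n"
  shows "Kfun \<alpha> \<beta> h n (z(m := of_real p * z m)) * (C * Phi m z) = rho m z * Kfun \<alpha> \<beta> h n z"
proof -
  define Pp where "Pp = of_real p powr (\<alpha> + \<beta> * of_nat (Suc m))"
  define P1 where "P1 = (\<Prod>l<m. h_den pos q N (of_real p * z m / z l) / h_num q N (of_real p * z m / z l))"
  define P2 where "P2 = (\<Prod>k\<in>{Suc m..<n}. h_num q N (z k / z m) / h_den pos q N (z k / z m))"
  define F1 where "F1 = (\<Prod>l<m. phi (of_real p * z m / z l))"
  define F2 where "F2 = (\<Prod>k\<in>{Suc m..<n}. phi (z k / z m))"
  define R1 where "R1 = (\<Prod>l<m. rfun q N (of_real p * z m / z l))"
  define R2 where "R2 = (\<Prod>k\<in>{Suc m..<n}. inverse (rfun q N (z k / z m)))"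
  have gx: "good q (of_real p * z m / z l)" if "l < m" for l using generic_goodp[OF gz, of m l] that m by auto
  have gw: "good q (z k / z m)" if "k \<in> {Suc m..<n}" for k using generic_good[OF gz, of k m] that m by auto
  have F2nz: "F2 \<noteq> 0" unfolding F2_def using phi_nz gw by (auto simp: prod_zero_iff)
  have KS: "Kfun \<alpha> \<beta> h n (z(m := of_real p * z m)) = Kfun \<alpha> \<beta> h n z * Pp * P1 * P2"
    unfolding Pp_def P1_def P2_def by (rule K_shift[OF hyp gz m])
  have f1: "P1 * F1 = A0 ^ m * R1"
  proof -
    have "P1 * F1 = (\<Prod>l<m. h_den pos q N (of_real p * z m / z l) / h_num q N (of_real p * z m / z l) * phi (of_real p * z m / z l))"
      unfolding P1_def F1_def by (rule prod.distrib[symmetric])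
    also have "\<dots> = (\<Prod>l<m. A0 * rfun q N (of_real p * z m / z l))"
      using fac1 gx by (intro prod.cong) auto
    also have "\<dots> = A0 ^ m * R1" unfolding R1_def by (simp add: prod.distrib)
    finally show ?thesis .
  qed
  have f2: "P2 / F2 = B0 ^ (n - Suc m) * R2"
  proof -
    have "P2 / F2 = (\<Prod>k\<in>{Suc m..<n}. h_num q N (z k / z m) / h_den pos q N (z k / z m) / phi (z k / z m))"
      unfolding P2_def F2_def by (rule prod_dividef[symmetric])
    also have "\<dots> = (\<Prod>k\<in>{Suc m..<n}. B0 * inverse (rfun q N (z k / z m)))"
      using fac2 gw by (intro prod.cong) auto
    also have "\<dots> = B0 ^ (n - Suc m) * R2" unfolding R2_def by (simp add: prod.distrib)
    finally show ?thesis .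
  qed
  have cst: "Pp * C * A0 ^ m * B0 ^ (n - Suc m) = 1" unfolding Pp_def by (rule const_id[OF powhyp m])
  have Phi_eq: "Phi m z = F1 / F2" unfolding Phi_def F1_def F2_def ..
  have rho_eq: "rho m z = R1 * R2" unfolding rho_def R1_def R2_def ..
  have gen: "\<And>K Pp P1 P2 C F1 F2 :: complex. F2 \<noteq> 0 \<Longrightarrow>
      K * Pp * P1 * P2 * (C * (F1 / F2)) = K * (Pp * C) * (P1 * F1) * (P2 / F2)"
    by (simp add: field_simps)
  have "Kfun \<alpha> \<beta> h n (z(m := of_real p * z m)) * (C * Phi m z) = Kfun \<alpha> \<beta> h n z * (Pp * C) * (P1 * F1) * (P2 / F2)"
    unfolding KS Phi_eq using gen[OF F2nz] .
  also have "\<dots> = Kfun \<alpha> \<beta> h n z * (Pp * C * A0 ^ m * B0 ^ (n - Suc m)) * (R1 * R2)"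
    unfolding f1 f2 by (simp add: algebra_simps)
  also have "\<dots> = rho m z * Kfun \<alpha> \<beta> h n z" unfolding cst rho_eq by simp
  finally show ?thesis .
qed

end

theorem proposition3p4:
  fixes n N :: nat and q p :: real and t12 :: complex and pos :: bool
    and d :: "nat \<Rightarrow> nat" and c :: "nat \<Rightarrow> complex"
    and f :: "nat list \<Rightarrow> (nat \<Rightarrow> complex) \<Rightarrow> complex"
    and C \<alpha> \<beta> :: complex and h :: "complex \<Rightarrow> complex"
  assumes "2 \<le> N" and "N \<le> n" and "0 < q" and "q < 1" and "0 < p" and "t12 \<noteq> 0"
    and "\<forall>j<N. 0 < d j" and "(\<Sum>j<N. d j) = n"
    and "qKZ_family pos t12 p n N d c f"
    and "if pos then t12 = of_real q else of_real q = - inverse t12"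
    and "(\<Prod>l<N. c l) \<noteq> 0"
    and "C ^ N = (\<Prod>l<N. c l)"
    and "if pos then
           of_real p powr \<alpha> = inverse C * of_real (q powr (- (real n + 1) * (1 / real N - 1)))
         \<and> of_real p powr \<beta> = of_real (q powr (2 * (1 / real N - 1)))
         else
           of_real p powr \<alpha> = (-1) ^ (n - 1) * inverse C * of_real (q powr (- (real n + 1) * (1 + 1 / real N)))
         \<and> of_real p powr \<beta> = of_real (q powr (2 * (1 + 1 / real N)))"
    and "\<forall>z. good q z \<longrightarrow> h (z / of_real p) / h z = h_num q N z / h_den pos q N z"
  shows "qKZ_solution q p n N (kappa c C) (Gfun \<alpha> \<beta> h n N d f)"
proof -
  interpret S: setting n N q p t12 pos d c f C
    by (unfold_locales) (use assms in auto)
  show ?thesis unfolding qKZ_solution_def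
  proof (intro allI impI)
    fix m z assume m: "m < n" and gz: "generic q p n z"
    have G: "Gfun \<alpha> \<beta> h n N d f y = sc (Kfun \<alpha> \<beta> h n y) (Ffun n N d f y)" for y
      unfolding Gfun_def sc_def ..
    have FT: "Ffun n N d f z \<in> tvecs n N" by (rule Ffun_tvecs)
    have "Gfun \<alpha> \<beta> h n N d f (z(m := of_real p * z m)) =
        sc (Kfun \<alpha> \<beta> h n (z(m := of_real p * z m))) (sc (C * S.Phi m z) (S.Ab m z (Ffun n N d f z)))"
      unfolding G S.core[OF m gz] ..
    also have "\<dots> = sc (S.rho m z * Kfun \<alpha> \<beta> h n z) (S.Ab m z (Ffun n N d f z))"
      unfolding sc_sc S.scalar_main[OF assms(14) assms(13) gz m] ..
    also have "\<dots> = qKZ_op q p n N (kappa c C) m z (Gfun \<alpha> \<beta> h n N d f z)"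
      unfolding G S.qKZ_op_eq[OF m gz sc_tvecs[OF FT]] S.Ab_sc[OF FT] sc_sc by (simp add: mult.commute)
    finally show "Gfun \<alpha> \<beta> h n N d f (z(m := of_real p * z m)) = qKZ_op q p n N (kappa c C) m z (Gfun \<alpha> \<beta> h n N d f z)" .
  qed
qed


end
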